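(* Let $\mathbf b=(b_1,b_2)\in\mathbb N^2$ with $\gcd(b_1,b_2)=1$ and $b_1\le b_2$, let $r\ge1$ and $\boldsymbol\alpha=(\alpha_1,\dots,\alpha_r)\in(0,1)^r$. With $\overline R(n)$ as below, for every $\varepsilon>0$, as $n\to\infty$, $$\mathbb E\big(\overline R(n)\big)=\prod_p\Big(1-\frac1{p^{b_1}}+\frac1{p^{b_1}}\Big(1-\frac1{p^{b_2}}\Big)^r\Big)+O\big(n^{-1/2+\varepsilon}\big),$$ where $p$ runs over all primes and the implied constant depends on $\boldsymbol\alpha,\mathbf b,r,\varepsilon$.
   Context: $\mathbf b$-visibility: given two distinct lattice points $P=(p_1,p_2)$, $Q=(q_1,q_2)\in\mathbb Z^2$, they determine a curve through both of the form $a_1(y-q_2)^{b_1}=a_2(x-q_1)^{b_2}$ for some $(a_1,a_2)\in\mathbb Q^2\setminus\{(0,0)\}$; $P$ is $\mathbf b$-visible from $Q$ if no other lattice point lies on the segment of this curve between $P$ and $Q$; a point $P\ne(0,0)$ is $\mathbf b$-visible if it is $\mathbf b$-visible from the origin. For $1\le j\le r$, $(P^{(j)}_i)_{i\ge0}$ is an $\alpha_j$-random walk ($P^{(j)}_0=(0,0)$, $P^{(j)}_{i+1}=P^{(j)}_i+(1,0)$ with probability $\alpha_j$ and $+(0,1)$ with probability $1-\alpha_j$, independently), the $r$ walks being mutually independent. $Y_i=1$ if all $P^{(j)}_i$, $1\le j\le r$, are $\mathbf b$-visible, $Y_i=0$ otherwise; $\overline R(n)=\frac1n\sum_{i=1}^nY_i$.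 *)

theory Defs
  imports "HOL-Probability.Probability" "HOL-Library.Landau_Symbols"
begin

text \<open>The curve through P and Q: a1 (y - q2)^b1 = a2 (x - q1)^b2 with (a1,a2) rational, not both 0.
  The segment of the curve between P and Q consists of the curve points lying in the closed
  coordinate box spanned by P and Q (on that box the curve is a single monotone arc).\<close>
definition on_curve :: "nat \<Rightarrow> nat \<Rightarrow> rat \<Rightarrow> rat \<Rightarrow> int \<times> int \<Rightarrow> int \<times> int \<Rightarrow> bool" where
  "on_curve b1 b2 a1 a2 Q R \<longleftrightarrow>
     a1 * of_int (snd R - snd Q) ^ b1 = a2 * of_int (fst R - fst Q) ^ b2"

definition in_box :: "int \<times> int \<Rightarrow> int \<times> int \<Rightarrow> int \<times> int \<Rightarrow> bool" where
  "in_box P Q R \<longleftrightarrow>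
     min (fst P) (fst Q) \<le> fst R \<and> fst R \<le> max (fst P) (fst Q) \<and>
     min (snd P) (snd Q) \<le> snd R \<and> snd R \<le> max (snd P) (snd Q)"

definition b_visible_from :: "nat \<Rightarrow> nat \<Rightarrow> int \<times> int \<Rightarrow> int \<times> int \<Rightarrow> bool" where
  "b_visible_from b1 b2 P Q \<longleftrightarrow> P \<noteq> Q \<and>
     (\<exists>a1 a2. (a1, a2) \<noteq> (0, 0) \<and> on_curve b1 b2 a1 a2 Q P \<and>
        (\<forall>R. on_curve b1 b2 a1 a2 Q R \<and> in_box P Q R \<longrightarrow> R = P \<or> R = Q))"

definition b_visible :: "nat \<Rightarrow> nat \<Rightarrow> int \<times> int \<Rightarrow> bool" where
  "b_visible b1 b2 P \<longleftrightarrow> P \<noteq> (0, 0) \<and> b_visible_from b1 b2 P (0, 0)"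

text \<open>Steps of the r walks (indices j < r, times k < n): True = step (1,0), False = step (0,1).
  The joint law of the first n steps of the r independent alpha_j-random walks.\<close>
definition walks_pmf :: "(nat \<Rightarrow> real) \<Rightarrow> nat \<Rightarrow> nat \<Rightarrow> (nat \<times> nat \<Rightarrow> bool) pmf" where
  "walks_pmf \<alpha> r n = Pi_pmf ({..<r} \<times> {..<n}) False (\<lambda>(j, k). bernoulli_pmf (\<alpha> j))"

definition walk_pos :: "(nat \<times> nat \<Rightarrow> bool) \<Rightarrow> nat \<Rightarrow> nat \<Rightarrow> int \<times> int" where
  "walk_pos \<omega> j i = (int (card {k. k < i \<and> \<omega> (j, k)}), int (card {k. k < i \<and> \<not> \<omega> (j, k)}))"

definition Y :: "nat \<Rightarrow> nat \<Rightarrow> nat \<Rightarrow> (nat \<times> nat \<Rightarrow> bool) \<Rightarrow> nat \<Rightarrow> real" where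
  "Y b1 b2 r \<omega> i = (if \<forall>j<r. b_visible b1 b2 (walk_pos \<omega> j i) then 1 else 0)"

definition Rbar :: "nat \<Rightarrow> nat \<Rightarrow> nat \<Rightarrow> nat \<Rightarrow> (nat \<times> nat \<Rightarrow> bool) \<Rightarrow> real" where
  "Rbar b1 b2 r n \<omega> = (1 / real n) * (\<Sum>i=1..n. Y b1 b2 r \<omega> i)"

end

theory Submission
  imports Defs
begin


lemma prod_pow_dvd:
  fixes S :: "nat set"
  assumes "finite S" "\<forall>p\<in>S. prime p" "\<forall>p\<in>S. p ^ b dvd m"
  shows "(\<Prod>S) ^ b dvd m"
  using assms
proof (induction S rule: finite_induct)
  case empty thus ?case by simp
next
  case (insert p F)
  have cop: "coprime p (\<Prod>F)"
  proof (intro prod_coprime_right)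
    fix q assume q: "q \<in> F"
    hence "q \<noteq> p" using insert.hyps(2) by auto
    moreover have "prime q" "prime p" using q insert.prems(1) by auto
    ultimately show "coprime p q" using primes_coprime by blast
  qed
  have "coprime (p ^ b) ((\<Prod>F) ^ b)" using cop by simp
  moreover have "p ^ b dvd m" "(\<Prod>F) ^ b dvd m" using insert by auto
  ultimately have "p ^ b * (\<Prod>F) ^ b dvd m" by (intro divides_mult) auto
  thus ?case using insert by (simp add: power_mult_distrib)
qed

lemma rat_root:
  fixes A B :: rat
  assumes "A > 0" "B > 0" "B ^ b1 = A ^ b2" "coprime b1 b2"
  shows "\<exists>s>0. A = s ^ b1 \<and> B = s ^ b2"
proof -
  have "gcd (int b1) (int b2) = 1" using assms(4) by (simp add: coprime_iff_gcd_eq_1 gcd_int_def)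
  then obtain u v where uv: "u * int b1 + v * int b2 = 1" using bezout_int[of "int b1" "int b2"] by auto
  define s where "s = A powi u * B powi v"
  have A0: "A \<noteq> 0" and B0: "B \<noteq> 0" using assms by auto
  have s0: "s > 0" unfolding s_def using assms by (intro mult_pos_pos zero_less_power_int) auto
  have e0: "B powi int b1 = A powi int b2" using assms(3) by simp
  have eB: "B powi (int b1 * v) = A powi (int b2 * v)"
    by (simp only: power_int_mult e0)
  have eA: "A powi (int b2 * u) = B powi (int b1 * u)"
    by (simp only: power_int_mult e0)
  have "s ^ b1 = s powi int b1" by simp
  also have "\<dots> = (A powi u) powi int b1 * (B powi v) powi int b1"
    unfolding s_def by (rule power_int_mult_distrib)
  also have "\<dots> = A powi (u * int b1) * B powi (v * int b1)"
    by (simp only: power_int_mult)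
  also have "\<dots> = A powi (u * int b1) * A powi (v * int b2)"
    using eB by (simp add: mult.commute)
  also have "\<dots> = A powi (u * int b1 + v * int b2)" using A0 by (simp add: power_int_add)
  also have "\<dots> = A" using uv by simp
  finally have 1: "A = s ^ b1" ..
  have "s ^ b2 = s powi int b2" by simp
  also have "\<dots> = (A powi u) powi int b2 * (B powi v) powi int b2"
    unfolding s_def by (rule power_int_mult_distrib)
  also have "\<dots> = A powi (u * int b2) * B powi (v * int b2)"
    by (simp only: power_int_mult)
  also have "\<dots> = B powi (u * int b1) * B powi (v * int b2)"
    using eA by (simp add: mult.commute)
  also have "\<dots> = B powi (u * int b1 + v * int b2)" using B0 by (simp add: power_int_add)
  also have "\<dots> = B" using uv by simp
  finally have 2: "B = s ^ b2" ..
  show ?thesis using s0 1 2 by blast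
qed

lemma vis_iff:
  assumes b1: "b1 \<ge> 1" and cop: "coprime b1 b2" and le: "b1 \<le> b2" and x: "x > 0" and y: "y > 0"
  shows "b_visible b1 b2 (int x, int y) \<longleftrightarrow> (\<forall>p. prime p \<longrightarrow> \<not> (p ^ b1 dvd x \<and> p ^ b2 dvd y))"
proof
  assume V: "b_visible b1 b2 (int x, int y)"
  show "\<forall>p. prime p \<longrightarrow> \<not> (p ^ b1 dvd x \<and> p ^ b2 dvd y)"
  proof (intro allI impI notI)
    fix p :: nat assume p: "prime p" and dd: "p ^ b1 dvd x \<and> p ^ b2 dvd y"
    obtain u where u: "x = p ^ b1 * u" using dd by (auto elim: dvdE)
    obtain v where v: "y = p ^ b2 * v" using dd by (auto elim: dvdE)
    have "\<exists>a1 a2. (a1, a2) \<noteq> (0, 0) \<and> on_curve b1 b2 a1 a2 (0, 0) (int x, int y) \<and>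
        (\<forall>R. on_curve b1 b2 a1 a2 (0, 0) R \<and> in_box (int x, int y) (0, 0) R \<longrightarrow>
                  R = (int x, int y) \<or> R = (0, 0))"
      using V unfolding b_visible_def b_visible_from_def by blast
    then obtain a1 a2 where nz: "(a1, a2) \<noteq> (0, 0)"
      and cv0: "on_curve b1 b2 a1 a2 (0, 0) (int x, int y)"
      and all: "\<And>R. on_curve b1 b2 a1 a2 (0, 0) R \<and> in_box (int x, int y) (0, 0) R \<Longrightarrow>
                  R = (int x, int y) \<or> R = (0, 0)"
      by blast
    have cv: "a1 * of_nat y ^ b1 = a2 * of_nat x ^ b2" using cv0 unfolding on_curve_def by simp
    have p2: "p ^ b1 \<ge> 2"
    proof -
      have "p \<ge> 2" using p by (simp add: prime_ge_2_nat)
      hence "p ^ 1 \<le> p ^ b1" using b1 by (intro power_increasing) auto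
      thus ?thesis using \<open>p \<ge> 2\<close> by simp
    qed
    have pp: "(of_nat p :: rat) ^ (b1 * b2) \<noteq> 0" using p by (simp add: prime_gt_0_nat)
    have "a1 * (of_nat p ^ (b1 * b2) * of_nat v ^ b1) = a2 * (of_nat p ^ (b1 * b2) * of_nat u ^ b2)"
      using cv unfolding u v by (simp add: power_mult_distrib power_mult[symmetric] mult.commute)
    hence cv2: "a1 * of_nat v ^ b1 = a2 * (of_nat u ^ b2 :: rat)"
      using pp by (metis (no_types, lifting) mult.left_commute mult_cancel_left)
    have u0: "u > 0" using x u by (cases "u = 0") auto
    have "2 * u \<le> p ^ b1 * u" using p2 by (rule mult_right_mono) simp
    hence ux: "u < x" using u u0 by linarith
    have "p ^ b2 > 0" using p prime_gt_0_nat by simp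
    hence "1 * v \<le> p ^ b2 * v" by (intro mult_right_mono) auto
    hence vy: "v \<le> y" using v by simp
    have "(int u, int v) = (int x, int y) \<or> (int u, int v) = (0, 0)"
      apply (rule all)
      using cv2 ux vy unfolding on_curve_def in_box_def by auto
    thus False using ux u0 by auto
  qed
next
  assume C: "\<forall>p. prime p \<longrightarrow> \<not> (p ^ b1 dvd x \<and> p ^ b2 dvd y)"
  have b2: "b2 \<ge> 1" using b1 le by simp
  define a1 :: rat where "a1 = of_nat x ^ b2"
  define a2 :: rat where "a2 = of_nat y ^ b1"
  have nz: "(a1, a2) \<noteq> (0, 0)" using x unfolding a1_def by simp
  have cv: "on_curve b1 b2 a1 a2 (0, 0) (int x, int y)"
    unfolding on_curve_def a1_def a2_def by simp
  have all: "R = (int x, int y) \<or> R = (0, 0)"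
    if R: "on_curve b1 b2 a1 a2 (0, 0) R" "in_box (int x, int y) (0, 0) R" for R
  proof -
    obtain U V where UV: "R = (U, V)" by fastforce
    have box: "0 \<le> U" "U \<le> int x" "0 \<le> V" "V \<le> int y"
      using R(2) x y unfolding in_box_def UV by auto
    obtain u where u: "U = int u" using box(1) nonneg_int_cases by blast
    obtain v where v: "V = int v" using box(3) nonneg_int_cases by blast
    have ux: "u \<le> x" and vy: "v \<le> y" using box u v by auto
    have eqr: "(of_nat x ^ b2 * of_nat v ^ b1 :: rat) = of_nat y ^ b1 * of_nat u ^ b2"
      using R(1) unfolding on_curve_def a1_def a2_def UV u v by simp
    hence eqn: "x ^ b2 * v ^ b1 = y ^ b1 * u ^ b2"
      by (metis (mono_tags, lifting) of_nat_eq_iff of_nat_mult of_nat_power)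
    show ?thesis
    proof (cases "u = 0")
      case True
      hence "x ^ b2 * v ^ b1 = 0" using eqn b2 by simp
      hence "v = 0" using x b1 by simp
      thus ?thesis using True UV u v by simp
    next
      case False
      hence u0: "u > 0" by simp
      have v0: "v > 0"
      proof (rule ccontr)
        assume "\<not> v > 0" hence "v = 0" by simp
        hence "y ^ b1 * u ^ b2 = 0" using eqn b1 by (simp add: zero_power)
        thus False using y u0 by simp
      qed
      define A :: rat where "A = of_nat u / of_nat x"
      define B :: rat where "B = of_nat v / of_nat y"
      have A0: "A > 0" "B > 0" unfolding A_def B_def using u0 v0 x y by auto
      have "B ^ b1 = A ^ b2"
        unfolding A_def B_def using eqr x y by (simp add: power_divide field_simps)
      then obtain s where s0: "s > 0" and sA: "A = s ^ b1" and sB: "B = s ^ b2"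
        using rat_root[OF A0 _ cop] by blast
      obtain c d where qs: "quotient_of s = (c, d)" by fastforce
      have sd: "s = of_int c / of_int d" using qs by (rule quotient_of_div)
      have d0: "d > 0" using qs by (rule quotient_of_denom_pos)
      have cd: "coprime c d" using qs by (rule quotient_of_coprime)
      have c0: "c > 0" using s0 d0 sd by (simp add: zero_less_divide_iff)
      define c' where "c' = nat c"
      define d' where "d' = nat d"
      have cc: "c = int c'" and dd: "d = int d'" using c0 d0 unfolding c'_def d'_def by auto
      have cd': "coprime c' d'" using cd unfolding cc dd by simp
      have d'0: "d' > 0" using d0 dd by simp
      have "(of_nat u / of_nat x :: rat) = of_nat c' ^ b1 / of_nat d' ^ b1"
        using sA unfolding A_def sd cc dd by (simp add: power_divide)
      hence "(of_nat (u * d' ^ b1) :: rat) = of_nat (x * c' ^ b1)"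
        using x d'0 by (simp add: field_simps)
      hence e1: "u * d' ^ b1 = x * c' ^ b1" by (simp only: of_nat_eq_iff)
      have "(of_nat v / of_nat y :: rat) = of_nat c' ^ b2 / of_nat d' ^ b2"
        using sB unfolding B_def sd cc dd by (simp add: power_divide)
      hence "(of_nat (v * d' ^ b2) :: rat) = of_nat (y * c' ^ b2)"
        using y d'0 by (simp add: field_simps)
      hence e2: "v * d' ^ b2 = y * c' ^ b2" by (simp only: of_nat_eq_iff)
      have dx: "d' ^ b1 dvd x"
      proof -
        have "d' ^ b1 dvd x * c' ^ b1" using e1 by (metis dvd_triv_right)
        moreover have "coprime (d' ^ b1) (c' ^ b1)" using cd' by (simp add: coprime_commute)
        ultimately show ?thesis using coprime_dvd_mult_left_iff by blast
      qed
      have dy: "d' ^ b2 dvd y"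
      proof -
        have "d' ^ b2 dvd y * c' ^ b2" using e2 by (metis dvd_triv_right)
        moreover have "coprime (d' ^ b2) (c' ^ b2)" using cd' by (simp add: coprime_commute)
        ultimately show ?thesis using coprime_dvd_mult_left_iff by blast
      qed
      have d1: "d' = 1"
      proof (rule ccontr)
        assume "d' \<noteq> 1"
        then obtain p where p: "prime p" "p dvd d'" using prime_factor_nat by blast
        have "p ^ b1 dvd x" using dx p(2) by (meson dvd_power_same dvd_trans)
        moreover have "p ^ b2 dvd y" using dy p(2) by (meson dvd_power_same dvd_trans)
        ultimately show False using C p(1) by blast
      qed
      have c'0: "c' \<ge> 1" using c0 cc by simp
      have "x * c' ^ b1 \<le> x * 1" using e1 d1 ux by simp
      hence "c' ^ b1 \<le> 1" using x by simp
      hence "c' = 1" using c'0 b1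
        by (metis le_antisym one_le_power power_one_right power_increasing le_trans)
      hence "u = x" "v = y" using e1 e2 d1 by auto
      thus ?thesis using UV u v by simp
    qed
  qed
  show "b_visible b1 b2 (int x, int y)"
    unfolding b_visible_def b_visible_from_def using nz cv all x by auto
qed


lemma Pi_pmf_block:
  fixes J :: "'a set" and K :: "'b set" and p :: "'a \<Rightarrow> 'c pmf"
  assumes J: "finite J" and K: "finite K"
  shows "Pi_pmf (J \<times> K) d (\<lambda>(j,k). p j) =
         map_pmf (\<lambda>F (j,k). if j \<in> J then F j k else d) (Pi_pmf J (\<lambda>_. d) (\<lambda>j. Pi_pmf K d (\<lambda>_. p j)))"
  (is "?L = map_pmf ?\<Phi> ?M")
proof (rule pmf_eqI)
  fix \<omega> :: "'a \<times> 'b \<Rightarrow> 'c"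
  define G where "G = (\<lambda>j. if j \<in> J then (\<lambda>k. \<omega> (j,k)) else (\<lambda>_. d))"
  have supp: "(\<forall>j. j \<notin> J \<longrightarrow> H j = (\<lambda>_. d)) \<and> (\<forall>j\<in>J. \<forall>k. k \<notin> K \<longrightarrow> H j k = d)"
    if "H \<in> set_pmf ?M" for H
  proof -
    have "H \<in> PiE_dflt J (\<lambda>_. d) (set_pmf \<circ> (\<lambda>j. Pi_pmf K d (\<lambda>_. p j)))"
      by (rule subsetD[OF set_Pi_pmf_subset'[OF J] that])
    hence H1: "\<And>j. j \<in> J \<Longrightarrow> H j \<in> set_pmf (Pi_pmf K d (\<lambda>_. p j))"
      and H2: "\<And>j. j \<notin> J \<Longrightarrow> H j = (\<lambda>_. d)"
      unfolding PiE_dflt_def by auto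
    have H3: "H j k = d" if "j \<in> J" "k \<notin> K" for j k
    proof -
      have "H j \<in> {f. \<forall>x. x \<notin> K \<longrightarrow> f x = d}"
        by (rule subsetD[OF set_Pi_pmf_subset[OF K] H1[OF that(1)]])
      thus ?thesis using that(2) by simp
    qed
    show ?thesis using H2 H3 by blast
  qed
  show "pmf ?L \<omega> = pmf (map_pmf ?\<Phi> ?M) \<omega>"
  proof (cases "\<forall>x. x \<notin> J \<times> K \<longrightarrow> \<omega> x = d")
    case True
    have pre: "?\<Phi> -` {\<omega>} \<inter> set_pmf ?M = {G} \<inter> set_pmf ?M"
    proof (intro equalityI subsetI)
      fix H assume H: "H \<in> ?\<Phi> -` {\<omega>} \<inter> set_pmf ?M"
      hence eq: "?\<Phi> H = \<omega>" and s: "H \<in> set_pmf ?M" by auto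
      have "H = G"
      proof (rule ext)
        fix j show "H j = G j"
        proof (cases "j \<in> J")
          case True
          show ?thesis
          proof (rule ext)
            fix k have "?\<Phi> H (j,k) = \<omega> (j,k)" using eq by simp
            thus "H j k = G j k" using True unfolding G_def by simp
          qed
        next
          case False thus ?thesis using supp[OF s] unfolding G_def by simp
        qed
      qed
      thus "H \<in> {G} \<inter> set_pmf ?M" using s by simp
    next
      fix H assume H: "H \<in> {G} \<inter> set_pmf ?M"
      have "?\<Phi> G = \<omega>"
      proof (rule ext)
        fix x :: "'a \<times> 'b"
        obtain j k where x: "x = (j,k)" by fastforce
        show "?\<Phi> G x = \<omega> x" using True unfolding x G_def by auto
      qed
      thus "H \<in> ?\<Phi> -` {\<omega>} \<inter> set_pmf ?M" using H by blast
    qed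
    have "pmf (map_pmf ?\<Phi> ?M) \<omega> = measure_pmf.prob ?M (?\<Phi> -` {\<omega>})" by (rule pmf_map)
    also have "\<dots> = measure_pmf.prob ?M (?\<Phi> -` {\<omega>} \<inter> set_pmf ?M)"
      by (rule measure_Int_set_pmf[symmetric])
    also have "\<dots> = measure_pmf.prob ?M ({G} \<inter> set_pmf ?M)" by (simp only: pre)
    also have "\<dots> = measure_pmf.prob ?M {G}" by (rule measure_Int_set_pmf)
    also have "\<dots> = pmf ?M G" by (simp add: measure_pmf_single)
    also have "\<dots> = (\<Prod>j\<in>J. pmf (Pi_pmf K d (\<lambda>_. p j)) (G j))"
      by (rule pmf_Pi'[OF J]) (simp add: G_def)
    also have "\<dots> = (\<Prod>j\<in>J. \<Prod>k\<in>K. pmf (p j) (\<omega> (j,k)))"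
    proof (rule prod.cong[OF refl])
      fix j assume j: "j \<in> J"
      show "pmf (Pi_pmf K d (\<lambda>_. p j)) (G j) = (\<Prod>k\<in>K. pmf (p j) (\<omega> (j,k)))"
        using j True by (subst pmf_Pi'[OF K]) (auto simp: G_def)
    qed
    also have "\<dots> = (\<Prod>x\<in>J \<times> K. pmf ((\<lambda>(j,k). p j) x) (\<omega> x))"
      by (subst prod.cartesian_product) (simp add: case_prod_unfold)
    also have "\<dots> = pmf ?L \<omega>"
      using True by (subst pmf_Pi'[OF finite_cartesian_product[OF J K]]) auto
    finally show ?thesis ..
  next
    case False
    have pre: "?\<Phi> -` {\<omega>} \<inter> set_pmf ?M = {}"
    proof (intro equalityI subsetI)
      fix H assume H: "H \<in> ?\<Phi> -` {\<omega>} \<inter> set_pmf ?M"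
      hence eq: "?\<Phi> H = \<omega>" and s: "H \<in> set_pmf ?M" by auto
      from False obtain x where x: "x \<notin> J \<times> K" "\<omega> x \<noteq> d" by blast
      obtain j k where xx: "x = (j,k)" by fastforce
      have "?\<Phi> H (j,k) = d" using supp[OF s] x(1) unfolding xx by auto
      thus "H \<in> {}" using eq x(2) xx by auto
    qed simp
    have "pmf (map_pmf ?\<Phi> ?M) \<omega> = measure_pmf.prob ?M (?\<Phi> -` {\<omega>})" by (rule pmf_map)
    also have "\<dots> = measure_pmf.prob ?M (?\<Phi> -` {\<omega>} \<inter> set_pmf ?M)"
      by (rule measure_Int_set_pmf[symmetric])
    also have "\<dots> = 0" by (simp only: pre) simp
    also have "0 = pmf ?L \<omega>"
      using False by (subst pmf_Pi_outside[OF finite_cartesian_product[OF J K]]) auto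
    finally show ?thesis ..
  qed
qed

lemma walk_binom:
  fixes \<phi> :: "nat \<Rightarrow> real"
  assumes "i \<le> n" "a \<in> {0..1}"
  shows "measure_pmf.expectation (Pi_pmf {..<n} False (\<lambda>_. bernoulli_pmf a)) (\<lambda>F. \<phi> (card {k. k < i \<and> F k}))
       = measure_pmf.expectation (binomial_pmf i a) \<phi>"
proof -
  have "binomial_pmf i a = map_pmf (\<lambda>f. card {x\<in>{..<i}. f x}) (Pi_pmf {..<i} False (\<lambda>_. bernoulli_pmf a))"
    using assms(2) by (intro binomial_pmf_altdef') auto
  also have "Pi_pmf {..<i} False (\<lambda>_. bernoulli_pmf a) =
       map_pmf (\<lambda>f x. if x \<in> {..<i} then f x else False) (Pi_pmf {..<n} False (\<lambda>_. bernoulli_pmf a))"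
    using assms(1) by (intro Pi_pmf_subset) auto
  also have "map_pmf (\<lambda>f. card {x\<in>{..<i}. f x}) (map_pmf (\<lambda>f x. if x \<in> {..<i} then f x else False)
        (Pi_pmf {..<n} False (\<lambda>_. bernoulli_pmf a))) =
      map_pmf (\<lambda>F. card {k. k < i \<and> F k}) (Pi_pmf {..<n} False (\<lambda>_. bernoulli_pmf a))"
    unfolding map_pmf_comp by (intro map_pmf_cong refl arg_cong[where f=card]) auto
  finally show ?thesis by simp
qed

lemma expect_prod:
  assumes "i \<le> n" "\<forall>j<r. \<alpha> j \<in> {0..1}" "\<And>j x. 0 \<le> \<phi> j x \<and> \<phi> j x \<le> (1::real)"
  shows "measure_pmf.expectation (walks_pmf \<alpha> r n) (\<lambda>\<omega>. \<Prod>j<r. \<phi> j (card {k. k < i \<and> \<omega> (j,k)}))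
       = (\<Prod>j<r. measure_pmf.expectation (binomial_pmf i (\<alpha> j)) (\<phi> j))"
proof -
  let ?M = "Pi_pmf {..<r} (\<lambda>_. False) (\<lambda>j. Pi_pmf {..<n} False (\<lambda>_. bernoulli_pmf (\<alpha> j)))"
  have W: "walks_pmf \<alpha> r n = map_pmf (\<lambda>F (j,k). if j \<in> {..<r} then F j k else False) ?M"
    unfolding walks_pmf_def by (rule Pi_pmf_block) auto
  have "measure_pmf.expectation (walks_pmf \<alpha> r n) (\<lambda>\<omega>. \<Prod>j<r. \<phi> j (card {k. k < i \<and> \<omega> (j,k)}))
      = measure_pmf.expectation ?M (\<lambda>G. \<Prod>j\<in>{..<r}. (\<lambda>j F. \<phi> j (card {k. k < i \<and> F k})) j (G j))"
    unfolding W integral_map_pmf by (intro Bochner_Integration.integral_cong refl prod.cong) auto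
  also have "\<dots> = (\<Prod>j\<in>{..<r}. measure_pmf.expectation (Pi_pmf {..<n} False (\<lambda>_. bernoulli_pmf (\<alpha> j)))
                       (\<lambda>F. \<phi> j (card {k. k < i \<and> F k})))"
    using assms(3) by (intro expectation_prod_Pi_pmf measure_pmf.integrable_const_bound[where B=1]) auto
  also have "\<dots> = (\<Prod>j<r. measure_pmf.expectation (binomial_pmf i (\<alpha> j)) (\<phi> j))"
    using assms(1,2) by (intro prod.cong refl walk_binom) auto
  finally show ?thesis .
qed


definition bq :: "nat \<Rightarrow> real \<Rightarrow> nat \<Rightarrow> real" where
  "bq i g k = real (i choose k) * g ^ k * (1 - g) ^ (i - k)"

lemma bq_nonneg: "0 \<le> g \<Longrightarrow> g \<le> 1 \<Longrightarrow> bq i g k \<ge> 0"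
  unfolding bq_def by simp

lemma bq_gt: "k > i \<Longrightarrow> bq i g k = 0"
  unfolding bq_def by simp

lemma bq_sum: "(\<Sum>k\<le>i. bq i g k) = 1"
  using binomial_ring[of g "1 - g" i] unfolding bq_def by simp

lemma bq_M1: "(\<Sum>k\<le>i. real k * bq i g k) = real i * g"
proof (cases i)
  case 0 thus ?thesis by (simp add: bq_def)
next
  case (Suc m)
  have "(\<Sum>k\<le>i. real k * bq i g k) = (\<Sum>k\<le>m. real (Suc k) * bq (Suc m) g (Suc k))"
    unfolding Suc sum.atMost_Suc_shift by simp
  also have "\<dots> = (\<Sum>k\<le>m. real (Suc m) * g * bq m g k)"
  proof (rule sum.cong[OF refl])
    fix k assume k: "k \<in> {..m}"
    have e: "real (Suc k) * real (Suc m choose Suc k) = real (Suc m) * real (m choose k)"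
      by (simp only: of_nat_mult[symmetric] Suc_times_binomial)
    have "real (Suc k) * bq (Suc m) g (Suc k) = (real (Suc k) * real (Suc m choose Suc k)) * g ^ Suc k * (1 - g) ^ (m - k)"
      unfolding bq_def by simp
    also have "\<dots> = real (Suc m) * g * bq m g k" unfolding e bq_def by simp
    finally show "real (Suc k) * bq (Suc m) g (Suc k) = real (Suc m) * g * bq m g k" .
  qed
  also have "\<dots> = real (Suc m) * g" by (simp add: sum_distrib_left[symmetric] bq_sum)
  finally show ?thesis using Suc by simp
qed

lemma bq_M2: "(\<Sum>k\<le>i. real k * (real k - 1) * bq i g k) = real i * (real i - 1) * g ^ 2"
proof (cases i)
  case 0 thus ?thesis by (simp add: bq_def)
next
  case (Suc m)
  have "(\<Sum>k\<le>i. real k * (real k - 1) * bq i g k) = (\<Sum>k\<le>m. real (Suc k) * real k * bq (Suc m) g (Suc k))"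
    unfolding Suc sum.atMost_Suc_shift by simp
  also have "\<dots> = (\<Sum>k\<le>m. real (Suc m) * g * (real k * bq m g k))"
  proof (rule sum.cong[OF refl])
    fix k assume k: "k \<in> {..m}"
    have e: "real (Suc k) * real (Suc m choose Suc k) = real (Suc m) * real (m choose k)"
      by (simp only: of_nat_mult[symmetric] Suc_times_binomial)
    have "real (Suc k) * real k * bq (Suc m) g (Suc k) = real k * (real (Suc k) * real (Suc m choose Suc k)) * g ^ Suc k * (1 - g) ^ (m - k)"
      unfolding bq_def by simp
    also have "\<dots> = real (Suc m) * g * (real k * bq m g k)" unfolding e bq_def by simp
    finally show "real (Suc k) * real k * bq (Suc m) g (Suc k) = real (Suc m) * g * (real k * bq m g k)" .
  qed
  also have "\<dots> = real (Suc m) * g * (real m * g)" by (simp add: sum_distrib_left[symmetric] bq_M1)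
  finally show ?thesis using Suc by (simp add: power2_eq_square)
qed

lemma bq_var: "(\<Sum>k\<le>i. bq i g k * (real k - c) ^ 2) =
   real i * (real i - 1) * g ^ 2 + (1 - 2 * c) * (real i * g) + c ^ 2"
proof -
  have "\<And>k. bq i g k * (real k - c) ^ 2 = real k * (real k - 1) * bq i g k + (1 - 2 * c) * (real k * bq i g k) + c ^ 2 * bq i g k"
    by (simp add: power2_eq_square algebra_simps)
  hence "(\<Sum>k\<le>i. bq i g k * (real k - c) ^ 2) = (\<Sum>k\<le>i. real k * (real k - 1) * bq i g k) + (1 - 2 * c) * (\<Sum>k\<le>i. real k * bq i g k) + c ^ 2 * (\<Sum>k\<le>i. bq i g k)"
    by (simp add: sum.distrib sum_distrib_left)
  thus ?thesis by (simp only: bq_M1 bq_M2 bq_sum)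
qed

lemma bq_var2: "(\<Sum>k\<le>i. bq i g k * (real k - (real i + 1) * g) ^ 2) = real i * g * (1 - g) + g ^ 2"
  unfolding bq_var by (simp add: power2_eq_square algebra_simps)

lemma choose_shift2: "real (Suc (Suc i) choose Suc (Suc z)) * (real z + 1) * (real z + 2) = (real i + 1) * (real i + 2) * real (i choose z)"
proof -
  define A where "A = Suc (Suc i) choose Suc (Suc z)"
  define B where "B = Suc i choose Suc z"
  define C where "C = i choose z"
  have a: "Suc (Suc z) * A = Suc (Suc i) * B" unfolding A_def B_def by (rule Suc_times_binomial)
  have b: "Suc z * B = Suc i * C" unfolding B_def C_def by (rule Suc_times_binomial)
  have a': "(real z + 2) * real A = (real i + 2) * real B"
    using arg_cong[OF a, of real] by (simp add: algebra_simps)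
  have b': "(real z + 1) * real B = (real i + 1) * real C"
    using arg_cong[OF b, of real] by (simp add: algebra_simps)
  have "real A * (real z + 1) * (real z + 2) = (real z + 1) * ((real z + 2) * real A)" by (simp add: ac_simps)
  also have "\<dots> = (real i + 2) * ((real z + 1) * real B)" unfolding a' by (simp add: ac_simps)
  also have "\<dots> = (real i + 1) * (real i + 2) * real C" unfolding b' by (simp add: ac_simps)
  finally show ?thesis unfolding A_def C_def .
qed

lemma aux_cancel:
  fixes a X u v G1 G2 :: real
  assumes "a = X * u / v" "u \<noteq> 0"
  shows "a * G1 * G2 / u = X * G1 * G2 / v"
  using assms by (simp add: field_simps)

lemma bq_H:
  assumes "0 < g" "g < 1"
  shows "(\<Sum>k\<le>i. bq i g k / ((real (i - k) + 1) * (real (i - k) + 2))) \<le> 1 / ((real i + 1) * (real i + 2) * (1 - g) ^ 2)"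
proof -
  define d where "d = 1 - g"
  have d0: "d > 0" "d < 1" using assms unfolding d_def by auto
  let ?f = "\<lambda>k. bq i g k / ((real (i - k) + 1) * (real (i - k) + 2))"
  have "(\<Sum>k\<le>i. ?f k) = (\<Sum>z\<le>i. ?f (i - z))"
    by (rule sum.reindex_bij_witness[of _ "\<lambda>z. i - z" "\<lambda>z. i - z"]) auto
  also have "\<dots> = (\<Sum>z\<le>i. bq (Suc (Suc i)) d (Suc (Suc z)) / (d ^ 2 * ((real i + 1) * (real i + 2))))"
  proof (rule sum.cong[OF refl])
    fix z assume z: "z \<in> {..i}"
    hence zi: "z \<le> i" by simp
    have "?f (i - z) = real (i choose z) * g ^ (i - z) * d ^ z / ((real z + 1) * (real z + 2))"
      using zi unfolding bq_def d_def by (simp add: binomial_symmetric[of z i, symmetric])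
    also have "\<dots> = real (Suc (Suc i) choose Suc (Suc z)) * g ^ (i - z) * d ^ z / ((real i + 1) * (real i + 2))"
    proof -
      have e: "real (i choose z) = real (Suc (Suc i) choose Suc (Suc z)) * (real z + 1) * (real z + 2) / ((real i + 1) * (real i + 2))"
      proof -
        have "(real i + 1) * (real i + 2) > 0" by (intro mult_pos_pos) auto
        hence "real (i choose z) = (real i + 1) * (real i + 2) * real (i choose z) / ((real i + 1) * (real i + 2))"
          by simp
        also have "\<dots> = real (Suc (Suc i) choose Suc (Suc z)) * (real z + 1) * (real z + 2) / ((real i + 1) * (real i + 2))"
          by (simp only: choose_shift2)
        finally show ?thesis .
      qed
      have u: "(real z + 1) * (real z + 2) \<noteq> 0" by (simp add: add_pos_pos)
      show ?thesis by (rule aux_cancel[OF _ u]) (use e in \<open>simp add: mult.assoc\<close>)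
    qed
    also have "\<dots> = bq (Suc (Suc i)) d (Suc (Suc z)) / (d ^ 2 * ((real i + 1) * (real i + 2)))"
    proof -
      have gd: "1 - d = g" unfolding d_def by simp
      have bb: "bq (Suc (Suc i)) d (Suc (Suc z)) = real (Suc (Suc i) choose Suc (Suc z)) * d ^ z * d ^ 2 * g ^ (i - z)"
        unfolding bq_def gd by (simp add: power2_eq_square del: binomial_Suc_Suc)
      define X where "X = real (Suc (Suc i) choose Suc (Suc z))"
      define N where "N = (real i + 1) * (real i + 2)"
      have "X * g ^ (i - z) * d ^ z / N = (d ^ 2 * (X * g ^ (i - z) * d ^ z)) / (d ^ 2 * N)"
        using d0 by (intro nonzero_mult_divide_mult_cancel_left[symmetric]) simp
      also have "\<dots> = (X * d ^ z * d ^ 2 * g ^ (i - z)) / (d ^ 2 * N)" by (simp only: ac_simps)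
      finally show ?thesis unfolding bb X_def N_def .
    qed
    finally show "?f (i - z) = bq (Suc (Suc i)) d (Suc (Suc z)) / (d ^ 2 * ((real i + 1) * (real i + 2)))" .
  qed
  also have "\<dots> = (\<Sum>z\<le>i. bq (Suc (Suc i)) d (Suc (Suc z))) / (d ^ 2 * ((real i + 1) * (real i + 2)))"
    by (simp add: sum_divide_distrib)
  also have "\<dots> \<le> 1 / (d ^ 2 * ((real i + 1) * (real i + 2)))"
  proof (rule divide_right_mono)
    have "(\<Sum>z\<le>i. bq (Suc (Suc i)) d (Suc (Suc z))) = (\<Sum>w\<in>(\<lambda>z. Suc (Suc z)) ` {..i}. bq (Suc (Suc i)) d w)"
      by (subst sum.reindex) (auto simp: inj_on_def)
    also have "\<dots> \<le> (\<Sum>w\<le>Suc (Suc i). bq (Suc (Suc i)) d w)"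
      using d0 by (intro sum_mono2) (auto intro: bq_nonneg)
    also have "\<dots> = 1" by (rule bq_sum)
    finally show "(\<Sum>z\<le>i. bq (Suc (Suc i)) d (Suc (Suc z))) \<le> 1" .
  qed (use d0 in simp)
  finally show ?thesis unfolding d_def by (simp add: ac_simps)
qed

definition bqm :: "nat \<Rightarrow> real \<Rightarrow> nat \<Rightarrow> real" where
  "bqm i g k = (if k = 0 then 0 else bq i g (k - 1))"

lemma D_id:
  assumes "k \<le> i"
  shows "bqm i g k * ((real i - real k + 1) * g) = bq i g k * real k * (1 - g)"
proof (cases k)
  case 0 thus ?thesis by (simp add: bqm_def)
next
  case (Suc k')
  have ki: "k' < i" using assms Suc by simp
  have e: "real (i - k') * real (i choose k') = real (Suc k') * real (i choose Suc k')"
  proof -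
    have "(i - k') * (i choose k') = Suc k' * (i choose Suc k')"
      by (simp only: binomial_absorb_comp binomial_absorption)
    thus ?thesis by (metis of_nat_mult)
  qed
  have p: "(1 - g) ^ (i - k') = (1 - g) ^ (i - Suc k') * (1 - g)"
  proof -
    have "i - k' = Suc (i - Suc k')" using ki by simp
    thus ?thesis by simp
  qed
  have ri: "real i - real (Suc k') + 1 = real (i - k')" using ki by (simp add: of_nat_diff)
  have "bqm i g k * ((real i - real k + 1) * g) = (real (i - k') * real (i choose k')) * g ^ Suc k' * (1 - g) ^ (i - k')"
    unfolding Suc bqm_def bq_def ri by (simp add: ac_simps)
  also have "\<dots> = bq i g k * real k * (1 - g)"
    unfolding e Suc bq_def p by (simp add: ac_simps)
  finally show ?thesis .
qed

lemma D_abs: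
  assumes "0 < g" "g < 1" "k \<le> i"
  shows "\<bar>bq i g k - bqm i g k\<bar> = bq i g k * \<bar>(real i + 1) * g - real k\<bar> / ((real i - real k + 1) * g)"
proof -
  have Y: "(real i - real k + 1) * g > 0" using assms by (intro mult_pos_pos) auto
  have "(bq i g k - bqm i g k) * ((real i - real k + 1) * g) = bq i g k * ((real i + 1) * g - real k)"
    using D_id[OF assms(3), of g] by (simp add: algebra_simps)
  hence "bq i g k - bqm i g k = bq i g k * ((real i + 1) * g - real k) / ((real i - real k + 1) * g)"
    using Y by (subst nonzero_eq_divide_eq) auto
  thus ?thesis using Y bq_nonneg[of g i k] assms by (simp add: abs_mult abs_divide)
qed

lemma amgm:
  fixes X Y t :: real
  assumes "Y > 0" "t > 0"
  shows "\<bar>X\<bar> / Y \<le> (t * X ^ 2 + 1 / (t * Y ^ 2)) / 2"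
proof -
  have "0 \<le> (t * \<bar>X\<bar> * Y - 1) ^ 2" by simp
  hence "2 * t * \<bar>X\<bar> * Y \<le> t ^ 2 * X ^ 2 * Y ^ 2 + 1" by (simp add: power2_eq_square algebra_simps)
  thus ?thesis using assms by (simp add: field_simps power2_eq_square)
qed

lemma geom_decay:
  assumes "0 < g" "g < 1" "i \<ge> 1"
  shows "g ^ i \<le> 1 / ((1 - g) * sqrt (real i))"
proof -
  have gs: "(1 - g) * (\<Sum>k<n. g ^ k) = 1 - g ^ n" for n
  proof (induct n)
    case 0 show ?case by simp
  next
    case (Suc n)
    have "(1 - g) * (\<Sum>k<Suc n. g ^ k) = (1 - g) * (\<Sum>k<n. g ^ k) + (1 - g) * g ^ n"
      by (simp add: algebra_simps)
    also have "\<dots> = 1 - g ^ Suc n" unfolding Suc by (simp add: algebra_simps)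
    finally show ?case .
  qed
  have "real i * g ^ i = (\<Sum>k<i. g ^ i)" by simp
  also have "\<dots> \<le> (\<Sum>k<i. g ^ k)" using assms by (intro sum_mono power_decreasing) auto
  finally have "(1 - g) * (real i * g ^ i) \<le> (1 - g) * (\<Sum>k<i. g ^ k)"
    using assms by (intro mult_left_mono) auto
  also have "\<dots> \<le> 1" unfolding gs using assms by simp
  finally have a: "(1 - g) * real i * g ^ i \<le> 1" by (simp add: ac_simps)
  have si: "sqrt (real i) \<le> real i"
  proof -
    have s1: "1 \<le> sqrt (real i)" using assms by simp
    have "sqrt (real i) * 1 \<le> sqrt (real i) * sqrt (real i)" using s1 by (intro mult_left_mono) auto
    thus ?thesis by simp
  qed
  have "(1 - g) * sqrt (real i) * g ^ i \<le> (1 - g) * real i * g ^ i"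
    using assms si by (intro mult_right_mono mult_left_mono) auto
  hence "(1 - g) * sqrt (real i) * g ^ i \<le> 1" using a by linarith
  moreover have "(1 - g) * sqrt (real i) > 0" using assms by simp
  ultimately show ?thesis by (simp add: field_simps)
qed

lemma aux3:
  fixes xp xs xr xg xd :: real
  assumes "xp > 0" "xs > 0" "xr > 0" "xg > 0" "xd > 0"
  shows "(1 / (2 * (1 / (xp * xs)))) * (2 / (xg * (xp * xr * xd))) = xs / ((xg * xd) * xr)"
  using assms by (simp add: field_simps)

lemma T_bound:
  assumes g: "0 < g" "g < 1" and i: "i \<ge> 1"
  shows "(\<Sum>k<Suc (Suc i). \<bar>bq i g k - bqm i g k\<bar>) \<le> (1/2 + 1/(g^2*(1-g)^2) + 1/(1-g)) / sqrt (real i)"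
proof -
  define s where "s = sqrt (real i)"
  have s0: "s > 0" using i unfolding s_def by simp
  have ss: "s * s = real i" unfolding s_def by simp
  define t where "t = 1 / ((real i + 1) * s)"
  have t0: "t > 0" using s0 unfolding t_def by simp
  define c where "c = g^2 * (1-g)^2"
  have c0: "c > 0" using g unfolding c_def by simp
  define X where "X = (\<lambda>k. (real i + 1) * g - real k)"
  define Y where "Y = (\<lambda>k. (real i - real k + 1) * g)"
  have Y0: "Y k > 0" if "k \<le> i" for k using that g unfolding Y_def by (intro mult_pos_pos) auto
  have "(\<Sum>k\<le>i. \<bar>bq i g k - bqm i g k\<bar>) = (\<Sum>k\<le>i. bq i g k * (\<bar>X k\<bar> / Y k))"
    by (intro sum.cong refl) (use g in \<open>auto simp: D_abs X_def Y_def\<close>)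
  also have "\<dots> \<le> (\<Sum>k\<le>i. bq i g k * ((t * (X k)^2 + 1/(t * (Y k)^2)) / 2))"
    by (intro sum_mono mult_left_mono amgm Y0 t0 bq_nonneg) (use g in auto)
  also have "\<dots> = (t/2) * (\<Sum>k\<le>i. bq i g k * (X k)^2) + (1/(2*t)) * (\<Sum>k\<le>i. bq i g k / (Y k)^2)"
    by (simp add: sum_distrib_left sum.distrib[symmetric] field_simps)
  also have "\<dots> \<le> (t/2) * (real i + 1) + (1/(2*t)) * (2 / (g^2 * ((real i + 1) * (real i + 2) * (1 - g)^2)))"
  proof (rule add_mono; rule mult_left_mono)
    have "(\<Sum>k\<le>i. bq i g k * (X k)^2) = (\<Sum>k\<le>i. bq i g k * (real k - (real i + 1) * g)^2)"
      unfolding X_def by (intro sum.cong refl) (simp add: power2_commute)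
    also have "\<dots> = real i * g * (1 - g) + g^2" by (rule bq_var2)
    also have "\<dots> \<le> real i + 1"
    proof -
      have "real i * g * (1 - g) \<le> real i * 1 * 1" using g by (intro mult_mono) auto
      moreover have "g^2 \<le> 1" using g by (simp add: power_le_one)
      ultimately show ?thesis by simp
    qed
    finally show "(\<Sum>k\<le>i. bq i g k * (X k)^2) \<le> real i + 1" .
  next
    have "(\<Sum>k\<le>i. bq i g k / (Y k)^2) \<le> (\<Sum>k\<le>i. (2 / g^2) * (bq i g k / ((real (i - k) + 1) * (real (i - k) + 2))))"
    proof (rule sum_mono)
      fix k assume k: "k \<in> {..i}"
      define a where "a = real (i - k)"
      have a0: "a \<ge> 0" unfolding a_def by simp
      have Ya: "Y k = (a + 1) * g" unfolding Y_def a_def using k by (simp add: of_nat_diff)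
      have le: "(a + 1) * (a + 2) * g^2 \<le> 2 * ((a + 1) * g)^2"
      proof -
        have "(a + 1) * (a + 2) \<le> 2 * (a + 1) * (a + 1)" using a0 by (simp add: algebra_simps)
        hence "(a + 1) * (a + 2) * g^2 \<le> 2 * (a + 1) * (a + 1) * g^2" by (intro mult_right_mono) auto
        thus ?thesis by (simp add: power2_eq_square ac_simps)
      qed
      have pos: "(a + 1) * (a + 2) * g^2 > 0" using a0 g by (intro mult_pos_pos) auto
      have "1 / (Y k)^2 \<le> 2 / ((a + 1) * (a + 2) * g^2)"
      proof -
        have Q: "((a + 1) * g)^2 > 0" using a0 g by simp
        have "1 / (Y k)^2 = 2 / (2 * ((a + 1) * g)^2)" unfolding Ya by simp
        also have "\<dots> \<le> 2 / ((a + 1) * (a + 2) * g^2)"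
          by (rule divide_left_mono) (use le pos Q in auto)
        finally show ?thesis .
      qed
      hence "bq i g k * (1 / (Y k)^2) \<le> bq i g k * (2 / ((a + 1) * (a + 2) * g^2))"
        by (intro mult_left_mono bq_nonneg) (use g in auto)
      thus "bq i g k / (Y k)^2 \<le> (2 / g^2) * (bq i g k / ((real (i - k) + 1) * (real (i - k) + 2)))"
        unfolding a_def by (simp add: field_simps)
    qed
    also have "\<dots> = (2 / g^2) * (\<Sum>k\<le>i. bq i g k / ((real (i - k) + 1) * (real (i - k) + 2)))"
      by (simp add: sum_distrib_left)
    also have "\<dots> \<le> (2 / g^2) * (1 / ((real i + 1) * (real i + 2) * (1 - g) ^ 2))"
      by (intro mult_left_mono bq_H g) auto
    also have "\<dots> = 2 / (g^2 * ((real i + 1) * (real i + 2) * (1 - g)^2))" by simp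
    finally show "(\<Sum>k\<le>i. bq i g k / (Y k)^2) \<le> 2 / (g^2 * ((real i + 1) * (real i + 2) * (1 - g)^2))" .
  qed (use t0 in auto)
  also have "(t/2) * (real i + 1) = 1 / (2 * s)"
  proof -
    have "0 \<le> s * (real i * 2)" using s0 by simp
    hence "s * 2 + s * (real i * 2) \<noteq> 0" using s0 by linarith
    thus ?thesis unfolding t_def using s0 by (simp add: field_simps)
  qed
  also have "(1/(2*t)) * (2 / (g^2 * ((real i + 1) * (real i + 2) * (1 - g)^2))) = s / (c * (real i + 2))"
    unfolding t_def c_def using s0 g by (intro aux3) auto
  also have "s / (c * (real i + 2)) \<le> 1 / (c * s)"
  proof -
    have cp: "c * (real i + 2) > 0" using c0 by simp
    have "s / (c * (real i + 2)) = (s * s) / (c * s * (real i + 2))" using s0 c0 by simp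
    also have "\<dots> \<le> (real i + 2) / (c * s * (real i + 2))"
      unfolding ss using s0 c0 by (intro divide_right_mono) auto
    also have "\<dots> = 1 / (c * s)" using s0 c0 by simp
    finally show ?thesis .
  qed
  finally have A: "(\<Sum>k\<le>i. \<bar>bq i g k - bqm i g k\<bar>) \<le> 1 / (2 * s) + 1 / (c * s)" by simp
  have B: "\<bar>bq i g (Suc i) - bqm i g (Suc i)\<bar> \<le> 1 / ((1 - g) * s)"
  proof -
    have "\<bar>bq i g (Suc i) - bqm i g (Suc i)\<bar> = g ^ i" using g by (simp add: bqm_def bq_def binomial_eq_0)
    also have "\<dots> \<le> 1 / ((1 - g) * s)" unfolding s_def using geom_decay[OF g i] .
    finally show ?thesis .
  qed
  have "(\<Sum>k<Suc (Suc i). \<bar>bq i g k - bqm i g k\<bar>) = (\<Sum>k\<le>i. \<bar>bq i g k - bqm i g k\<bar>) + \<bar>bq i g (Suc i) - bqm i g (Suc i)\<bar>"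
    by (simp add: lessThan_Suc_atMost)
  also have "\<dots> \<le> 1 / (2 * s) + 1 / (c * s) + 1 / ((1 - g) * s)" using A B by linarith
  also have "\<dots> = (1/2 + 1/c + 1/(1-g)) / s" using g s0 c0 by (simp add: field_simps)
  finally show ?thesis unfolding c_def s_def .
qed

lemma mod_eq_int_dvd: "((k::nat) mod m = a mod m) \<longleftrightarrow> int m dvd (int k - int a)"
proof -
  have "(k mod m = a mod m) \<longleftrightarrow> (int k mod int m = int a mod int m)"
    by (metis of_nat_eq_iff of_nat_mod)
  also have "\<dots> \<longleftrightarrow> int m dvd (int k - int a)" by (rule mod_eq_dvd_iff)
  finally show ?thesis .
qed

lemma modSuc: "(Suc k mod m = Suc a mod m) \<longleftrightarrow> (k mod m = a mod m)"
  unfolding mod_eq_int_dvd by simp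

definition sres :: "nat \<Rightarrow> real \<Rightarrow> nat \<Rightarrow> nat \<Rightarrow> real" where
  "sres i g m a = (\<Sum>k<Suc (Suc i). bq i g k * (if k mod m = a mod m then 1 else 0))"

lemma sres_atMost: "sres i g m a = (\<Sum>k\<le>i. bq i g k * (if k mod m = a mod m then 1 else 0))"
  unfolding sres_def lessThan_Suc_atMost by (simp add: bq_gt)

lemma sres_mod: "sres i g m (a mod m) = sres i g m a"
  unfolding sres_def by simp

lemma sres_total:
  assumes "m > 0"
  shows "(\<Sum>a<m. sres i g m a) = 1"
proof -
  have inner: "(\<Sum>a<m. bq i g k * (if k mod m = a mod m then 1 else 0)) = bq i g k" for k
  proof -
    have "(\<Sum>a<m. bq i g k * (if k mod m = a mod m then 1 else 0)) = (\<Sum>a<m. if a = k mod m then bq i g k else 0)"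
      by (intro sum.cong refl) auto
    also have "\<dots> = bq i g k" using assms by (subst sum.delta) auto
    finally show ?thesis .
  qed
  have "(\<Sum>a<m. sres i g m a) = (\<Sum>k<Suc (Suc i). (\<Sum>a<m. bq i g k * (if k mod m = a mod m then 1 else 0)))"
    unfolding sres_def by (rule sum.swap)
  also have "\<dots> = (\<Sum>k<Suc (Suc i). bq i g k)"
    by (simp only: inner)
  also have "\<dots> = 1" unfolding lessThan_Suc_atMost using bq_sum[of i g] by (simp add: bq_gt)
  finally show ?thesis .
qed

lemma sres_step:
  "sres i g m (Suc a) - sres i g m a =
     (\<Sum>k<Suc (Suc i). (bq i g k - bqm i g k) * (if k mod m = Suc a mod m then 1 else 0))"
proof -
  have "(\<Sum>k<Suc (Suc i). bqm i g k * (if k mod m = Suc a mod m then 1 else 0)) =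
        (\<Sum>k<Suc i. bq i g k * (if k mod m = a mod m then 1 else 0))"
    unfolding sum.lessThan_Suc_shift[of _ "Suc i"] by (simp add: bqm_def modSuc)
  also have "\<dots> = sres i g m a"
    unfolding sres_def by (simp add: bq_gt)
  finally have e: "(\<Sum>k<Suc (Suc i). bqm i g k * (if k mod m = Suc a mod m then 1 else 0)) = sres i g m a" .
  show ?thesis unfolding e[symmetric] unfolding sres_def by (simp add: sum_subtractf left_diff_distrib)
qed

lemma sres_shift:
  assumes "m > 0" "t \<le> m"
  shows "\<bar>sres i g m (c + t) - sres i g m c\<bar> \<le> (\<Sum>k<Suc (Suc i). \<bar>bq i g k - bqm i g k\<bar>)"
proof -
  let ?D = "\<lambda>k. bq i g k - bqm i g k"
  let ?I = "\<lambda>u k. (if k mod m = Suc (c + u) mod m then 1 else 0 :: real)"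
  have "sres i g m (c + t) - sres i g m c = (\<Sum>u<t. sres i g m (c + Suc u) - sres i g m (c + u))"
    by (subst sum_lessThan_telescope[of "\<lambda>u. sres i g m (c + u)"]) simp
  also have "\<dots> = (\<Sum>u<t. \<Sum>k<Suc (Suc i). ?D k * ?I u k)"
  proof (rule sum.cong[OF refl])
    fix u have cu: "c + Suc u = Suc (c + u)" by simp
    show "sres i g m (c + Suc u) - sres i g m (c + u) = (\<Sum>k<Suc (Suc i). ?D k * ?I u k)"
      unfolding cu by (rule sres_step)
  qed
  finally have eq: "sres i g m (c + t) - sres i g m c = (\<Sum>u<t. \<Sum>k<Suc (Suc i). ?D k * ?I u k)" .
  have "\<bar>\<Sum>u<t. \<Sum>k<Suc (Suc i). ?D k * ?I u k\<bar> \<le> (\<Sum>u<t. \<Sum>k<Suc (Suc i). \<bar>?D k\<bar> * ?I u k)"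
    by (rule order.trans[OF sum_abs sum_mono], rule order.trans[OF sum_abs sum_mono]) (simp add: abs_mult)
  also have "\<dots> = (\<Sum>k<Suc (Suc i). \<bar>?D k\<bar> * (\<Sum>u<t. ?I u k))"
    by (subst sum.swap) (simp add: sum_distrib_left)
  also have "\<dots> \<le> (\<Sum>k<Suc (Suc i). \<bar>?D k\<bar> * 1)"
  proof (intro sum_mono mult_left_mono)
    fix k
    have "(\<Sum>u<t. ?I u k) = real (card {u\<in>{..<t}. k mod m = Suc (c + u) mod m})"
      by (simp add: sum.If_cases Int_def conj_commute)
    also have "card {u\<in>{..<t}. k mod m = Suc (c + u) mod m} \<le> 1"
    proof -
      have "\<forall>x\<in>{u\<in>{..<t}. k mod m = Suc (c + u) mod m}. \<forall>y\<in>{u\<in>{..<t}. k mod m = Suc (c + u) mod m}. x = y"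
      proof (intro ballI)
        fix x y assume x: "x \<in> {u\<in>{..<t}. k mod m = Suc (c + u) mod m}" and y: "y \<in> {u\<in>{..<t}. k mod m = Suc (c + u) mod m}"
        hence "Suc (c + x) mod m = Suc (c + y) mod m" by simp
        hence "int m dvd (int x - int y)" unfolding mod_eq_int_dvd by simp
        moreover have "x < m" "y < m" using x y assms by auto
        ultimately show "x = y"
          by (metis dvd_imp_le_int mod_eq_int_dvd mod_less)
      qed
      thus ?thesis using card_le_Suc0_iff_eq[of "{u\<in>{..<t}. k mod m = Suc (c + u) mod m}"] by simp
    qed
    finally show "(\<Sum>u<t. ?I u k) \<le> 1" by simp
  qed simp
  finally show ?thesis unfolding eq by simp
qed

lemma sres_close:
  assumes "m > 0"
  shows "\<bar>sres i g m a - 1 / real m\<bar> \<le> (\<Sum>k<Suc (Suc i). \<bar>bq i g k - bqm i g k\<bar>)"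
proof -
  define T where "T = (\<Sum>k<Suc (Suc i). \<bar>bq i g k - bqm i g k\<bar>)"
  have pair: "\<bar>sres i g m a - sres i g m b\<bar> \<le> T" if b: "b < m" for b
  proof -
    define a' where "a' = a mod m"
    have a'm: "a' < m" unfolding a'_def using assms by simp
    have sa: "sres i g m a = sres i g m a'" unfolding a'_def by (simp add: sres_mod)
    show ?thesis
    proof (cases "a' \<le> b")
      case True
      have "\<bar>sres i g m (a' + (b - a')) - sres i g m a'\<bar> \<le> T"
        unfolding T_def using assms b by (intro sres_shift) auto
      thus ?thesis using True sa by (simp add: abs_minus_commute)
    next
      case False
      have "\<bar>sres i g m (b + (a' - b)) - sres i g m b\<bar> \<le> T"
        unfolding T_def using assms a'm by (intro sres_shift) auto
      thus ?thesis using False sa by simp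
    qed
  qed
  have "sres i g m a - 1 / real m = (\<Sum>b<m. sres i g m a - sres i g m b) / real m"
    using assms sres_total[OF assms, of i g] by (simp add: sum_subtractf field_simps)
  hence "\<bar>sres i g m a - 1 / real m\<bar> = \<bar>\<Sum>b<m. sres i g m a - sres i g m b\<bar> / real m"
    by simp
  also have "\<dots> \<le> (\<Sum>b<m. T) / real m"
    using assms by (intro divide_right_mono order.trans[OF sum_abs sum_mono] pair) auto
  also have "\<dots> = T" using assms by simp
  finally show ?thesis unfolding T_def .
qed

lemma bin_residue:
  assumes "0 < g" "g < 1" "i \<ge> 1" "m > 0"
  shows "\<bar>(\<Sum>k\<le>i. bq i g k * (if k mod m = a mod m then 1 else 0)) - 1 / real m\<bar>
          \<le> (1/2 + 1/(g^2*(1-g)^2) + 1/(1-g)) / sqrt (real i)"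
  using sres_close[OF assms(4), of i g a] T_bound[OF assms(1-3)] unfolding sres_atMost by linarith


definition cp :: "nat \<Rightarrow> nat \<Rightarrow> nat \<Rightarrow> real" where "cp b2 r p = (1 - 1 / real p ^ b2) ^ r"
definition gfun :: "nat \<Rightarrow> nat \<Rightarrow> nat \<Rightarrow> nat \<Rightarrow> real" where
  "gfun b1 b2 r i = (\<Prod>p\<in>{p. prime p \<and> p ^ b1 dvd i}. cp b2 r p)"
definition Lfin :: "nat \<Rightarrow> nat \<Rightarrow> nat \<Rightarrow> nat \<Rightarrow> real" where
  "Lfin b1 b2 r n = (\<Prod>p\<in>{p. prime p \<and> p \<le> n}. 1 + (cp b2 r p - 1) / real p ^ b1)"

lemma prod_if_all:
  fixes f :: "'a \<Rightarrow> real"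
  assumes "finite S"
  shows "(\<Prod>x\<in>S. if P x then f x else 0) = (if (\<forall>x\<in>S. P x) then (\<Prod>x\<in>S. f x) else 0)"
  using assms by (induction S rule: finite_induct) auto

lemma prod_pow_dvd_iff:
  fixes S :: "nat set"
  assumes "finite S" "\<forall>p\<in>S. prime p"
  shows "(\<forall>p\<in>S. p ^ b dvd m) \<longleftrightarrow> (\<Prod>S) ^ b dvd m"
proof
  assume "\<forall>p\<in>S. p ^ b dvd m" thus "(\<Prod>S) ^ b dvd m" using prod_pow_dvd assms by blast
next
  assume h: "(\<Prod>S) ^ b dvd m"
  show "\<forall>p\<in>S. p ^ b dvd m"
  proof
    fix p assume "p \<in> S"
    hence "p dvd \<Prod>S" using assms(1) by (intro dvd_prodI)
    hence "p ^ b dvd (\<Prod>S) ^ b" by (rule dvd_power_same)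
    thus "p ^ b dvd m" using h by (rule dvd_trans)
  qed
qed

lemma prod_primes_pos: "finite S \<Longrightarrow> \<forall>p\<in>S. prime p \<Longrightarrow> (\<Prod>S) > (0::nat)"
  by (simp add: prime_gt_0_nat prod_pos)

lemma card_mult:
  assumes "D \<ge> (1::nat)"
  shows "card {i\<in>{1..n}. D dvd i} = n div D"
proof -
  have "{i\<in>{1..n}. D dvd i} = (\<lambda>k. D * k) ` {1..n div D}"
  proof (intro equalityI subsetI)
    fix i assume i: "i \<in> {i\<in>{1..n}. D dvd i}"
    then obtain k where k: "i = D * k" by (auto elim: dvdE)
    have "k \<ge> 1" using i k by (cases k) auto
    moreover have "k \<le> n div D" using i k assms by (simp add: less_eq_div_iff_mult_less_eq mult.commute)
    ultimately show "i \<in> (\<lambda>k. D * k) ` {1..n div D}" using k by auto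
  next
    fix i assume "i \<in> (\<lambda>k. D * k) ` {1..n div D}"
    then obtain k where k: "i = D * k" "1 \<le> k" "k \<le> n div D" by (elim imageE) auto
    have "D * k \<le> n" using k(3) assms by (simp add: less_eq_div_iff_mult_less_eq mult.commute)
    moreover have "D * k \<ge> 1" using k(2) assms by simp
    ultimately show "i \<in> {i\<in>{1..n}. D dvd i}" using k by auto
  qed
  moreover have "inj_on (\<lambda>k. D * k) {1..n div D}" using assms by (auto simp: inj_on_def)
  ultimately show ?thesis by (simp add: card_image)
qed

lemma gfun_expand:
  assumes b1: "b1 \<ge> 1" and i: "1 \<le> i" "i \<le> n"
  shows "gfun b1 b2 r i = (\<Sum>S\<in>Pow {p. prime p \<and> p \<le> n}.
            if (\<Prod>S) ^ b1 dvd i then (\<Prod>p\<in>S. cp b2 r p - 1) else 0)"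
proof -
  let ?P = "{p. prime p \<and> p \<le> n}"
  have fin: "finite ?P" by simp
  have sub: "{p. prime p \<and> p ^ b1 dvd i} = {p\<in>?P. p ^ b1 dvd i}"
  proof (intro equalityI subsetI)
    fix p assume p: "p \<in> {p. prime p \<and> p ^ b1 dvd i}"
    have "p dvd p ^ b1" using b1 by (intro dvd_power) auto
    hence "p dvd i" using p by (auto intro: dvd_trans)
    hence "p \<le> i" using i by (intro dvd_imp_le) auto
    thus "p \<in> {p\<in>?P. p ^ b1 dvd i}" using p i by auto
  qed auto
  have "gfun b1 b2 r i = (\<Prod>p\<in>?P. if p ^ b1 dvd i then cp b2 r p else 1)"
    unfolding gfun_def sub using fin by (rule prod.inter_filter)
  also have "\<dots> = (\<Prod>p\<in>?P. (if p ^ b1 dvd i then cp b2 r p - 1 else 0) + 1)"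
    by (intro prod.cong) auto
  also have "\<dots> = (\<Sum>S\<in>Pow ?P. (\<Prod>p\<in>S. if p ^ b1 dvd i then cp b2 r p - 1 else 0) * (\<Prod>p\<in>?P - S. 1))"
    using fin by (rule prod_add)
  also have "\<dots> = (\<Sum>S\<in>Pow ?P. if (\<Prod>S) ^ b1 dvd i then (\<Prod>p\<in>S. cp b2 r p - 1) else 0)"
  proof (rule sum.cong[OF refl])
    fix S assume S: "S \<in> Pow ?P"
    hence fS: "finite S" using fin by (auto intro: finite_subset)
    have pS: "\<forall>p\<in>S. prime p" using S by auto
    show "(\<Prod>p\<in>S. if p ^ b1 dvd i then cp b2 r p - 1 else 0) * (\<Prod>p\<in>?P - S. 1) =
          (if (\<Prod>S) ^ b1 dvd i then (\<Prod>p\<in>S. cp b2 r p - 1) else 0)"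
      using prod_if_all[OF fS] prod_pow_dvd_iff[OF fS pS] by simp
  qed
  finally show ?thesis .
qed

lemma sum_g:
  assumes b1: "b1 \<ge> 1" and n: "n \<ge> 1"
  shows "(\<Sum>i=1..n. gfun b1 b2 r i) = (\<Sum>S\<in>Pow {p. prime p \<and> p \<le> n}.
            (\<Prod>p\<in>S. cp b2 r p - 1) * real (n div (\<Prod>S) ^ b1))"
proof -
  let ?P = "{p. prime p \<and> p \<le> n}"
  have fin: "finite ?P" by simp
  have "(\<Sum>i=1..n. gfun b1 b2 r i) = (\<Sum>i=1..n. \<Sum>S\<in>Pow ?P. if (\<Prod>S) ^ b1 dvd i then (\<Prod>p\<in>S. cp b2 r p - 1) else 0)"
    by (intro sum.cong refl gfun_expand b1) auto
  also have "\<dots> = (\<Sum>S\<in>Pow ?P. \<Sum>i=1..n. if (\<Prod>S) ^ b1 dvd i then (\<Prod>p\<in>S. cp b2 r p - 1) else 0)"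
    by (rule sum.swap)
  also have "\<dots> = (\<Sum>S\<in>Pow ?P. (\<Prod>p\<in>S. cp b2 r p - 1) * real (n div (\<Prod>S) ^ b1))"
  proof (rule sum.cong[OF refl])
    fix S assume S: "S \<in> Pow ?P"
    hence fS: "finite S" using fin by (auto intro: finite_subset)
    have pS: "\<forall>p\<in>S. prime p" using S by auto
    have D1: "(\<Prod>S) ^ b1 \<ge> 1" using prod_primes_pos[OF fS pS] by simp
    have "(\<Sum>i=1..n. if (\<Prod>S) ^ b1 dvd i then (\<Prod>p\<in>S. cp b2 r p - 1) else 0) =
          (\<Sum>i\<in>{i\<in>{1..n}. (\<Prod>S) ^ b1 dvd i}. (\<Prod>p\<in>S. cp b2 r p - 1))"
      by (rule sum.inter_filter[symmetric]) simp
    also have "\<dots> = (\<Prod>p\<in>S. cp b2 r p - 1) * real (n div (\<Prod>S) ^ b1)"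
      using card_mult[OF D1, of n] by simp
    finally show "(\<Sum>i=1..n. if (\<Prod>S) ^ b1 dvd i then (\<Prod>p\<in>S. cp b2 r p - 1) else 0) =
          (\<Prod>p\<in>S. cp b2 r p - 1) * real (n div (\<Prod>S) ^ b1)" .
  qed
  finally show ?thesis .
qed

lemma Lfin_expand:
  "Lfin b1 b2 r n = (\<Sum>S\<in>Pow {p. prime p \<and> p \<le> n}. (\<Prod>p\<in>S. cp b2 r p - 1) / real ((\<Prod>S) ^ b1))"
proof -
  let ?P = "{p. prime p \<and> p \<le> n}"
  have fin: "finite ?P" by simp
  have "Lfin b1 b2 r n = (\<Prod>p\<in>?P. (cp b2 r p - 1) / real p ^ b1 + 1)"
    unfolding Lfin_def by (simp add: add.commute)
  also have "\<dots> = (\<Sum>S\<in>Pow ?P. (\<Prod>p\<in>S. (cp b2 r p - 1) / real p ^ b1) * (\<Prod>p\<in>?P - S. 1))"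
    using fin by (rule prod_add)
  also have "\<dots> = (\<Sum>S\<in>Pow ?P. (\<Prod>p\<in>S. cp b2 r p - 1) / real ((\<Prod>S) ^ b1))"
    by (intro sum.cong refl) (simp add: prod_dividef prod_power_distrib)
  finally show ?thesis .
qed

lemma floor_err:
  assumes "n \<ge> (1::nat)" "D \<ge> (1::nat)"
  shows "\<bar>real (n div D) / real n - 1 / real D\<bar> \<le> 1 / (sqrt (real n) * sqrt (real D))"
proof -
  have e0: "real (D * (n div D) + n mod D) = real n" by (simp only: mult_div_mod_eq)
  hence nd: "real D * real (n div D) + real (n mod D) = real n" by (simp only: of_nat_add of_nat_mult)
  hence md: "real (n mod D) = real n - real D * real (n div D)" by linarith
  define t where "t = real (n mod D) / (real D * real n)"
  have eq: "1 / real D - real (n div D) / real n = t"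
    unfolding t_def md using assms by (simp add: field_simps)
  have t0: "t \<ge> 0" unfolding t_def by simp
  have t1: "t \<le> 1 / real n"
  proof -
    have "real (n mod D) \<le> real D" using assms by (simp add: less_imp_le)
    hence "real (n mod D) / (real D * real n) \<le> real D / (real D * real n)"
      by (intro divide_right_mono) auto
    thus ?thesis unfolding t_def using assms by simp
  qed
  have t2: "t \<le> 1 / real D"
  proof -
    have "real (n mod D) \<le> real n" by simp
    hence "real (n mod D) / (real D * real n) \<le> real n / (real D * real n)"
      by (intro divide_right_mono) auto
    thus ?thesis unfolding t_def using assms by simp
  qed
  have "t * t \<le> (1 / real n) * (1 / real D)" using t0 t1 t2 by (intro mult_mono) auto
  hence "t \<le> sqrt ((1 / real n) * (1 / real D))" using t0 by (intro real_le_rsqrt) (simp add: power2_eq_square)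
  also have "\<dots> = 1 / (sqrt (real n) * sqrt (real D))" by (simp add: real_sqrt_mult real_sqrt_divide)
  finally show ?thesis using eq t0 by (simp add: abs_minus_commute)
qed

lemma sqrt_prod:
  fixes f :: "'a \<Rightarrow> real"
  shows "(\<And>x. x \<in> S \<Longrightarrow> f x \<ge> 0) \<Longrightarrow> sqrt (\<Prod>x\<in>S. f x) = (\<Prod>x\<in>S. sqrt (f x))"
  by (induction S rule: infinite_finite_induct) (auto simp: real_sqrt_mult)

lemma cp_bounds:
  assumes "p \<ge> 1" "b2 \<ge> 1"
  shows "0 \<le> cp b2 r p" "cp b2 r p \<le> 1" "1 - cp b2 r p \<le> real r / real p ^ b2"
proof -
  have x: "0 \<le> 1 / real p ^ b2" "1 / real p ^ b2 \<le> 1" using assms by auto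
  show "0 \<le> cp b2 r p" unfolding cp_def using x by simp
  show "cp b2 r p \<le> 1" unfolding cp_def using x by (intro power_le_one) auto
  have "1 + real r * (- (1 / real p ^ b2)) \<le> (1 + - (1 / real p ^ b2)) ^ r"
    using x by (intro Bernoulli_inequality) auto
  thus "1 - cp b2 r p \<le> real r / real p ^ b2" unfolding cp_def by simp
qed

lemma pow_sqrt_bound:
  assumes "p \<ge> (1::nat)" "b1 \<ge> 1" "b2 \<ge> 1"
  shows "1 / (real p ^ b2 * sqrt (real p ^ b1)) \<le> real p powr (-3/2)"
proof -
  have p: "real p \<ge> 1" using assms by simp
  have "real p ^ 1 \<le> real p ^ b2" using p assms by (intro power_increasing) auto
  moreover have "real p ^ 1 \<le> real p ^ b1" using p assms by (intro power_increasing) auto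
  hence "sqrt (real p) \<le> sqrt (real p ^ b1)" by simp
  ultimately have "real p * sqrt (real p) \<le> real p ^ b2 * sqrt (real p ^ b1)" by (intro mult_mono) auto
  moreover have "real p * sqrt (real p) = real p powr (3/2)"
  proof -
    have "real p powr (3/2) = real p powr (1 + 1/2)" by simp
    also have "\<dots> = real p powr 1 * real p powr (1/2)" using p by (subst powr_add) auto
    also have "\<dots> = real p * sqrt (real p)" using p by (simp add: powr_half_sqrt)
    finally show ?thesis ..
  qed
  ultimately have le: "real p powr (3/2) \<le> real p ^ b2 * sqrt (real p ^ b1)" by simp
  have pos: "real p powr (3/2) > 0" using p by simp
  have "1 / (real p ^ b2 * sqrt (real p ^ b1)) \<le> 1 / real p powr (3/2)"
    using le pos by (intro divide_left_mono) auto
  also have "\<dots> = real p powr (-3/2)" using p by (simp add: powr_minus_divide)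
  finally show ?thesis .
qed

lemma MT_bound:
  assumes b1: "b1 \<ge> 1" and b2: "b2 \<ge> 1" and n: "n \<ge> 1"
  shows "\<bar>(\<Sum>i=1..n. gfun b1 b2 r i) / real n - Lfin b1 b2 r n\<bar>
           \<le> exp (real r * (\<Sum>m. real m powr (-3/2))) / sqrt (real n)"
proof -
  let ?P = "{p. prime p \<and> p \<le> n}"
  let ?a = "\<lambda>S. \<Prod>p\<in>S. cp b2 r p - 1"
  let ?D = "\<lambda>S. (\<Prod>S) ^ b1"
  let ?x = "\<lambda>p. \<bar>cp b2 r p - 1\<bar> / sqrt (real p ^ b1)"
  define Z where "Z = (\<Sum>m. real m powr (-3/2))"
  have fin: "finite ?P" by simp
  have summ: "summable (\<lambda>m. real m powr (-3/2))" by (subst summable_real_powr_iff) simp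
  have Sprops: "finite S" "\<forall>p\<in>S. prime p" "?D S \<ge> 1" if "S \<in> Pow ?P" for S
  proof -
    show fS: "finite S" using that fin by (auto intro: finite_subset)
    show pS: "\<forall>p\<in>S. prime p" using that by auto
    show "?D S \<ge> 1" using prod_primes_pos[OF fS pS] by simp
  qed
  have "(\<Sum>i=1..n. gfun b1 b2 r i) / real n - Lfin b1 b2 r n =
        (\<Sum>S\<in>Pow ?P. ?a S * (real (n div ?D S) / real n - 1 / real (?D S)))"
    unfolding sum_g[OF b1 n] Lfin_expand
    by (simp add: sum_divide_distrib sum_subtractf right_diff_distrib)
  hence "\<bar>(\<Sum>i=1..n. gfun b1 b2 r i) / real n - Lfin b1 b2 r n\<bar> \<le>
        (\<Sum>S\<in>Pow ?P. \<bar>?a S\<bar> * \<bar>real (n div ?D S) / real n - 1 / real (?D S)\<bar>)"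
    by (simp add: abs_mult[symmetric] sum_abs)
  also have "\<dots> \<le> (\<Sum>S\<in>Pow ?P. \<bar>?a S\<bar> * (1 / (sqrt (real n) * sqrt (real (?D S)))))"
    by (intro sum_mono mult_left_mono floor_err n Sprops) auto
  also have "\<dots> = (1 / sqrt (real n)) * (\<Sum>S\<in>Pow ?P. \<Prod>p\<in>S. ?x p)"
  proof -
    have "\<bar>?a S\<bar> * (1 / (sqrt (real n) * sqrt (real (?D S)))) = (1 / sqrt (real n)) * (\<Prod>p\<in>S. ?x p)"
      if "S \<in> Pow ?P" for S
    proof -
      have "real (?D S) = (\<Prod>p\<in>S. real p ^ b1)"
        by (simp add: of_nat_prod prod_power_distrib)
      hence "sqrt (real (?D S)) = (\<Prod>p\<in>S. sqrt (real p ^ b1))"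
        by (simp add: sqrt_prod)
      thus ?thesis by (simp add: abs_prod prod_dividef)
    qed
    thus ?thesis by (simp add: sum_distrib_left)
  qed
  finally have E1: "\<bar>(\<Sum>i=1..n. gfun b1 b2 r i) / real n - Lfin b1 b2 r n\<bar> \<le>
      (1 / sqrt (real n)) * (\<Sum>S\<in>Pow ?P. \<Prod>p\<in>S. ?x p)" .
  have Sx: "(\<Sum>p\<in>?P. ?x p) \<le> real r * Z"
  proof -
    have "(\<Sum>p\<in>?P. ?x p) \<le> (\<Sum>p\<in>?P. real r * real p powr (-3/2))"
    proof (rule sum_mono)
      fix p assume p: "p \<in> ?P"
      hence pp: "prime p" by simp
      have p1: "p \<ge> 1" using prime_gt_0_nat[OF pp] by simp
      have "\<bar>cp b2 r p - 1\<bar> = 1 - cp b2 r p" using cp_bounds[OF p1 b2, of r] by simp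
      also have "\<dots> \<le> real r / real p ^ b2" using cp_bounds[OF p1 b2, of r] by simp
      finally have "?x p \<le> (real r / real p ^ b2) / sqrt (real p ^ b1)"
        by (intro divide_right_mono) auto
      also have "\<dots> = real r * (1 / (real p ^ b2 * sqrt (real p ^ b1)))" by simp
      also have "\<dots> \<le> real r * real p powr (-3/2)"
        by (intro mult_left_mono pow_sqrt_bound p1 b1 b2) auto
      finally show "?x p \<le> real r * real p powr (-3/2)" .
    qed
    also have "\<dots> = real r * (\<Sum>p\<in>?P. real p powr (-3/2))" by (simp add: sum_distrib_left)
    also have "\<dots> \<le> real r * Z"
      unfolding Z_def by (intro mult_left_mono sum_le_suminf summ fin) auto
    finally show ?thesis .
  qed
  have E2: "(\<Sum>S\<in>Pow ?P. \<Prod>p\<in>S. ?x p) \<le> exp (real r * Z)"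
  proof -
    have "(\<Sum>S\<in>Pow ?P. \<Prod>p\<in>S. ?x p) = (\<Prod>p\<in>?P. ?x p + 1)"
      using prod_add[OF fin, of ?x "\<lambda>_. 1"] by simp
    also have "\<dots> \<le> exp (\<Sum>p\<in>?P. ?x p)"
      using prod_le_exp_sum[of ?P ?x] by (simp add: add.commute)
    also have "\<dots> \<le> exp (real r * Z)" using Sx by simp
    finally show ?thesis .
  qed
  have "(1 / sqrt (real n)) * (\<Sum>S\<in>Pow ?P. \<Prod>p\<in>S. ?x p) \<le> (1 / sqrt (real n)) * exp (real r * Z)"
    using E2 by (intro mult_left_mono) auto
  hence "\<bar>(\<Sum>i=1..n. gfun b1 b2 r i) / real n - Lfin b1 b2 r n\<bar> \<le> (1 / sqrt (real n)) * exp (real r * Z)"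
    using E1 by linarith
  thus ?thesis unfolding Z_def by simp
qed

lemma prod_diff_le:
  fixes a b :: "'a \<Rightarrow> real"
  assumes "finite J" "\<And>j. j \<in> J \<Longrightarrow> \<bar>a j\<bar> \<le> 1" "\<And>j. j \<in> J \<Longrightarrow> \<bar>b j\<bar> \<le> 1"
  shows "\<bar>(\<Prod>j\<in>J. a j) - (\<Prod>j\<in>J. b j)\<bar> \<le> (\<Sum>j\<in>J. \<bar>a j - b j\<bar>)"
  using assms
proof (induction J rule: finite_induct)
  case empty thus ?case by simp
next
  case (insert x F)
  have pa: "\<bar>\<Prod>j\<in>F. a j\<bar> \<le> 1" using insert by (simp add: abs_prod prod_le_1)
  have pb: "\<bar>\<Prod>j\<in>F. b j\<bar> \<le> 1" using insert by (simp add: abs_prod prod_le_1)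
  have "(\<Prod>j\<in>insert x F. a j) - (\<Prod>j\<in>insert x F. b j) =
        a x * ((\<Prod>j\<in>F. a j) - (\<Prod>j\<in>F. b j)) + (a x - b x) * (\<Prod>j\<in>F. b j)"
    using insert by (simp add: algebra_simps)
  hence "\<bar>(\<Prod>j\<in>insert x F. a j) - (\<Prod>j\<in>insert x F. b j)\<bar> \<le>
        \<bar>a x\<bar> * \<bar>(\<Prod>j\<in>F. a j) - (\<Prod>j\<in>F. b j)\<bar> + \<bar>a x - b x\<bar> * \<bar>\<Prod>j\<in>F. b j\<bar>"
    by (simp add: abs_mult[symmetric] abs_triangle_ineq)
  also have "\<dots> \<le> 1 * (\<Sum>j\<in>F. \<bar>a j - b j\<bar>) + \<bar>a x - b x\<bar> * 1"
    using insert pb by (intro add_mono mult_mono) auto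
  also have "\<dots> = (\<Sum>j\<in>insert x F. \<bar>a j - b j\<bar>)" using insert by simp
  finally show ?case .
qed

lemma tail_sq:
  assumes "n \<ge> 1" "N \<ge> n"
  shows "(\<Sum>m\<in>{n<..N}. 1 / real m ^ 2) \<le> 1 / real n - 1 / real N"
  using assms(2)
proof (induction N rule: dec_induct)
  case base thus ?case by simp
next
  case (step N)
  have N1: "real N \<ge> 1" using step assms by simp
  have "{n<..Suc N} = insert (Suc N) {n<..N}" using step by auto
  hence "(\<Sum>m\<in>{n<..Suc N}. 1 / real m ^ 2) = 1 / real (Suc N) ^ 2 + (\<Sum>m\<in>{n<..N}. 1 / real m ^ 2)"
    by simp
  also have "\<dots> \<le> (1 / real N - 1 / real (Suc N)) + (1 / real n - 1 / real N)"
  proof (rule add_mono[OF _ step.IH])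
    have "1 / real (Suc N) ^ 2 \<le> 1 / (real N * real (Suc N))"
      using N1 by (intro divide_left_mono) (auto simp: power2_eq_square)
    also have "\<dots> = 1 / real N - 1 / real (Suc N)" using N1 by (simp add: field_simps)
    finally show "1 / real (Suc N) ^ 2 \<le> 1 / real N - 1 / real (Suc N)" .
  qed
  finally show ?case by simp
qed

definition Ffac :: "nat \<Rightarrow> nat \<Rightarrow> nat \<Rightarrow> nat \<Rightarrow> real" where
  "Ffac b1 b2 r p = (if prime p then 1 - 1 / real p ^ b1 + 1 / real p ^ b1 * (1 - 1 / real p ^ b2) ^ r else 1)"

lemma Ffac_bounds:
  assumes b1: "b1 \<ge> 1" and b2: "b2 \<ge> 1"
  shows "0 \<le> Ffac b1 b2 r m" "Ffac b1 b2 r m \<le> 1" "1 - Ffac b1 b2 r m \<le> real r * real m powr (-2)"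
proof -
  have all: "0 \<le> Ffac b1 b2 r m \<and> Ffac b1 b2 r m \<le> 1 \<and> 1 - Ffac b1 b2 r m \<le> real r * real m powr (-2)"
  proof (cases "prime m")
    case False thus ?thesis by (simp add: Ffac_def)
  next
    case True
    have m1: "m \<ge> 1" using prime_gt_0_nat[OF True] by simp
    have mr: "real m \<ge> 1" using m1 by simp
    have F: "Ffac b1 b2 r m = 1 - (1 - cp b2 r m) / real m ^ b1"
      using True unfolding Ffac_def cp_def by (simp add: field_simps)
    note cb = cp_bounds[OF m1 b2, of r]
    have q: "1 / real m ^ b1 \<le> 1" using mr by simp
    have "(1 - cp b2 r m) / real m ^ b1 \<le> 1 / real m ^ b1" using cb by (intro divide_right_mono) auto
    hence u: "(1 - cp b2 r m) / real m ^ b1 \<le> 1" using q by linarith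
    have l: "0 \<le> (1 - cp b2 r m) / real m ^ b1" using cb by simp
    have "(1 - cp b2 r m) / real m ^ b1 \<le> (real r / real m ^ b2) / real m ^ b1"
      using cb by (intro divide_right_mono) auto
    also have "\<dots> = real r / (real m ^ b2 * real m ^ b1)" by simp
    also have "\<dots> \<le> real r / (real m * real m)"
    proof (rule divide_left_mono)
      have "real m ^ 1 \<le> real m ^ b2" using mr b2 by (intro power_increasing) auto
      moreover have "real m ^ 1 \<le> real m ^ b1" using mr b1 by (intro power_increasing) auto
      ultimately show "real m * real m \<le> real m ^ b2 * real m ^ b1" using mr by (intro mult_mono) auto
    qed (use mr in auto)
    also have "\<dots> = real r * real m powr (-2)"
      using mr by (simp add: powr_minus_divide power2_eq_square powr_realpow[symmetric])
    finally show ?thesis unfolding F using u l by simp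
  qed
  thus "0 \<le> Ffac b1 b2 r m" "Ffac b1 b2 r m \<le> 1" "1 - Ffac b1 b2 r m \<le> real r * real m powr (-2)" by auto
qed

lemma aux_q: "1 - 1 / q + 1 / q * c = 1 + (c - 1) / (q::real)"
  by (cases "q = 0") (simp_all add: field_simps)

lemma Lfin_Ffac: "Lfin b1 b2 r n = (\<Prod>m\<le>n. Ffac b1 b2 r m)"
proof -
  have "(\<Prod>m\<le>n. Ffac b1 b2 r m) = (\<Prod>m\<in>{m\<in>{..n}. prime m}. Ffac b1 b2 r m)"
    by (subst prod.inter_filter) (auto simp: Ffac_def intro!: prod.cong)
  also have "{m\<in>{..n}. prime m} = {p. prime p \<and> p \<le> n}" by auto
  also have "(\<Prod>m\<in>{p. prime p \<and> p \<le> n}. Ffac b1 b2 r m) = Lfin b1 b2 r n"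
    unfolding Lfin_def
  proof (intro prod.cong refl)
    fix m assume "m \<in> {p. prime p \<and> p \<le> n}"
    hence pm: "prime m" by simp
    show "Ffac b1 b2 r m = 1 + (cp b2 r m - 1) / real m ^ b1"
      unfolding Ffac_def cp_def if_P[OF pm] by (rule aux_q)
  qed
  finally show ?thesis ..
qed

lemma tail_bound:
  assumes b1: "b1 \<ge> 1" and b2: "b2 \<ge> 1" and n: "n \<ge> 1"
  shows "\<bar>Lfin b1 b2 r n - prodinf (Ffac b1 b2 r)\<bar> \<le> real r / real n"
proof -
  let ?F = "Ffac b1 b2 r"
  note Fb = Ffac_bounds[OF b1 b2, of r]
  have summ: "summable (\<lambda>m. norm (?F m - 1))"
  proof (rule summable_comparison_test')
    show "summable (\<lambda>m. real r * real m powr (-2))"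
      by (intro summable_mult) (subst summable_real_powr_iff, simp)
    fix m :: nat
    show "norm (norm (?F m - 1)) \<le> real r * real m powr (-2)"
      using Fb[of m] by simp
  qed
  have conv: "convergent_prod ?F"
    by (intro abs_convergent_prod_imp_convergent_prod summable_imp_abs_convergent_prod summ)
  have lim: "(\<lambda>N. \<Prod>i\<le>N. ?F i) \<longlonglongrightarrow> prodinf ?F"
    using conv by (rule convergent_prod_LIMSEQ)
  have bnd: "\<bar>(\<Prod>i\<le>N. ?F i) - Lfin b1 b2 r n\<bar> \<le> real r / real n" if N: "N \<ge> n" for N
  proof -
    have un: "{..N} = {..n} \<union> {n<..N}" using N by auto
    have "(\<Prod>i\<le>N. ?F i) = (\<Prod>i\<le>n. ?F i) * (\<Prod>i\<in>{n<..N}. ?F i)"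
      unfolding un by (rule prod.union_disjoint) auto
    hence "(\<Prod>i\<le>N. ?F i) - Lfin b1 b2 r n = (\<Prod>i\<le>n. ?F i) * ((\<Prod>i\<in>{n<..N}. ?F i) - (\<Prod>i\<in>{n<..N}. 1))"
      unfolding Lfin_Ffac by (simp add: algebra_simps)
    hence "\<bar>(\<Prod>i\<le>N. ?F i) - Lfin b1 b2 r n\<bar> = \<bar>\<Prod>i\<le>n. ?F i\<bar> * \<bar>(\<Prod>i\<in>{n<..N}. ?F i) - (\<Prod>i\<in>{n<..N}. 1)\<bar>"
      by (simp add: abs_mult)
    also have "\<dots> \<le> 1 * (\<Sum>i\<in>{n<..N}. \<bar>?F i - 1\<bar>)"
    proof (rule mult_mono)
      show "\<bar>\<Prod>i\<le>n. ?F i\<bar> \<le> 1" using Fb by (simp add: abs_prod prod_le_1)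
      show "\<bar>(\<Prod>i\<in>{n<..N}. ?F i) - (\<Prod>i\<in>{n<..N}. 1)\<bar> \<le> (\<Sum>i\<in>{n<..N}. \<bar>?F i - 1\<bar>)"
        using Fb by (intro prod_diff_le) auto
    qed auto
    also have "\<dots> = (\<Sum>i\<in>{n<..N}. \<bar>?F i - 1\<bar>)" by simp
    also have "\<dots> \<le> (\<Sum>i\<in>{n<..N}. real r * (1 / real i ^ 2))"
    proof (intro sum_mono)
      fix i assume i: "i \<in> {n<..N}"
      hence "real i \<ge> 1" using n by simp
      hence ip: "real i > 0" by simp
      have "real i powr (-2) = 1 / real i powr 2" by (simp add: powr_minus_divide)
      also have "real i powr 2 = real i ^ 2" using ip by simp
      finally have "real i powr (-2) = 1 / real i ^ 2" .
      thus "\<bar>?F i - 1\<bar> \<le> real r * (1 / real i ^ 2)" using Fb[of i] by simp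
    qed
    also have "\<dots> = real r * (\<Sum>i\<in>{n<..N}. 1 / real i ^ 2)" by (simp add: sum_distrib_left)
    also have "\<dots> \<le> real r * (1 / real n - 1 / real N)"
      by (intro mult_left_mono tail_sq n N) auto
    also have "\<dots> \<le> real r / real n" using N n by (simp add: right_diff_distrib)
    finally show ?thesis .
  qed
  have "(\<lambda>N. \<bar>(\<Prod>i\<le>N. ?F i) - Lfin b1 b2 r n\<bar>) \<longlonglongrightarrow> \<bar>prodinf ?F - Lfin b1 b2 r n\<bar>"
    by (intro tendsto_intros lim)
  hence "\<bar>prodinf ?F - Lfin b1 b2 r n\<bar> \<le> real r / real n"
    by (rule LIMSEQ_le_const2) (use bnd in blast)
  thus ?thesis by (simp add: abs_minus_commute)
qed



lemma alt_expand:
  fixes f :: "nat \<Rightarrow> real"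
  assumes "finite A"
  shows "(\<Prod>p\<in>A. 1 - f p) = (\<Sum>S\<in>Pow A. (-1) ^ card S * (\<Prod>p\<in>S. f p))"
proof -
  have "(\<Prod>p\<in>A. 1 - f p) = (\<Prod>p\<in>A. (- f p) + 1)" by simp
  also have "\<dots> = (\<Sum>S\<in>Pow A. (\<Prod>p\<in>S. - f p) * (\<Prod>p\<in>A - S. 1))" using assms by (rule prod_add)
  also have "\<dots> = (\<Sum>S\<in>Pow A. (-1) ^ card S * (\<Prod>p\<in>S. f p))" by (simp add: prod_uminus)
  finally show ?thesis .
qed

lemma Aset_props:
  assumes "b1 \<ge> 1" "i \<ge> (1::nat)"
  shows "finite {p. prime p \<and> p ^ b1 dvd i}"
proof -
  have "{p. prime p \<and> p ^ b1 dvd i} \<subseteq> {..i}"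
  proof
    fix p assume p: "p \<in> {p. prime p \<and> p ^ b1 dvd i}"
    have "p dvd p ^ b1" using assms by (intro dvd_power) auto
    hence "p dvd i" using p by (auto intro: dvd_trans)
    thus "p \<in> {..i}" using assms by (auto intro: dvd_imp_le)
  qed
  thus ?thesis by (rule finite_subset) simp
qed

lemma crit_expand:
  fixes A :: "nat set"
  assumes "finite A" "\<forall>p\<in>A. prime p"
  shows "(if \<forall>p\<in>A. \<not> p ^ b2 dvd y then 1 else 0 :: real) =
         (\<Sum>S\<in>Pow A. (-1) ^ card S * (if (\<Prod>S) ^ b2 dvd y then 1 else 0))"
proof -
  have "(\<Prod>p\<in>A. 1 - (if p ^ b2 dvd y then 1 else 0)) = (\<Prod>p\<in>A. if \<not> p ^ b2 dvd y then 1 else (0::real))"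
    by (intro prod.cong) auto
  also have "\<dots> = (if \<forall>p\<in>A. \<not> p ^ b2 dvd y then 1 else 0)"
    using prod_if_all[OF assms(1), of "\<lambda>p. \<not> p ^ b2 dvd y" "\<lambda>_. 1"] by simp
  finally have "(if \<forall>p\<in>A. \<not> p ^ b2 dvd y then 1 else 0 :: real) = (\<Prod>p\<in>A. 1 - (if p ^ b2 dvd y then 1 else 0))" ..
  also have "\<dots> = (\<Sum>S\<in>Pow A. (-1) ^ card S * (\<Prod>p\<in>S. (if p ^ b2 dvd y then 1 else 0)))"
    using assms(1) by (rule alt_expand)
  also have "\<dots> = (\<Sum>S\<in>Pow A. (-1) ^ card S * (if (\<Prod>S) ^ b2 dvd y then 1 else 0))"
  proof (rule sum.cong[OF refl])
    fix S assume S: "S \<in> Pow A"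
    hence fS: "finite S" using assms(1) by (auto intro: finite_subset)
    have pS: "\<forall>p\<in>S. prime p" using S assms(2) by auto
    show "(-1) ^ card S * (\<Prod>p\<in>S. (if p ^ b2 dvd y then 1 else 0)) = (-1) ^ card S * (if (\<Prod>S) ^ b2 dvd y then 1 else (0::real))"
      using prod_if_all[OF fS, of "\<lambda>p. p ^ b2 dvd y" "\<lambda>_. 1"] prod_pow_dvd_iff[OF fS pS, of b2 y] by simp
  qed
  finally show ?thesis .
qed

lemma h_expand:
  fixes A :: "nat set"
  assumes "finite A"
  shows "(\<Prod>p\<in>A. 1 - 1 / real p ^ b2) = (\<Sum>S\<in>Pow A. (-1) ^ card S * (1 / real ((\<Prod>S) ^ b2)))"
  using alt_expand[OF assms, of "\<lambda>p. 1 / real p ^ b2"]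
  by (simp add: prod_dividef of_nat_prod prod_power_distrib)

lemma vis_crit:
  assumes b1: "b1 \<ge> 1" and cop: "coprime b1 b2" and le: "b1 \<le> b2" and k: "0 < k" "k < i"
  shows "b_visible b1 b2 (int k, int (i - k)) \<longleftrightarrow> (\<forall>p\<in>{p. prime p \<and> p ^ b1 dvd i}. \<not> p ^ b2 dvd (i - k))"
proof -
  have "b_visible b1 b2 (int k, int (i - k)) \<longleftrightarrow> (\<forall>p. prime p \<longrightarrow> \<not> (p ^ b1 dvd k \<and> p ^ b2 dvd (i - k)))"
    using k by (intro vis_iff b1 cop le) auto
  also have "\<dots> \<longleftrightarrow> (\<forall>p\<in>{p. prime p \<and> p ^ b1 dvd i}. \<not> p ^ b2 dvd (i - k))"
  proof -
    have "(p ^ b1 dvd k \<and> p ^ b2 dvd (i - k)) \<longleftrightarrow> (p ^ b1 dvd i \<and> p ^ b2 dvd (i - k))" for p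
    proof -
      have pp: "p ^ b1 dvd p ^ b2" using le by (rule le_imp_power_dvd)
      have ik: "i = k + (i - k)" using k by simp
      show ?thesis
      proof
        assume h: "p ^ b1 dvd k \<and> p ^ b2 dvd (i - k)"
        hence "p ^ b1 dvd (i - k)" using pp by (auto intro: dvd_trans)
        hence "p ^ b1 dvd k + (i - k)" using h by simp
        thus "p ^ b1 dvd i \<and> p ^ b2 dvd (i - k)" using h ik by simp
      next
        assume h: "p ^ b1 dvd i \<and> p ^ b2 dvd (i - k)"
        hence h2: "p ^ b1 dvd (i - k)" using pp by (auto intro: dvd_trans)
        have "p ^ b1 dvd k + (i - k)" using h ik by simp
        hence "p ^ b1 dvd k" using h2 by (simp add: dvd_add_left_iff)
        thus "p ^ b1 dvd k \<and> p ^ b2 dvd (i - k)" using h by simp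
      qed
    qed
    thus ?thesis by auto
  qed
  finally show ?thesis .
qed

lemma walk_err:
  assumes b1: "b1 \<ge> 1" and cop: "coprime b1 b2" and le: "b1 \<le> b2" and a: "0 < a" "a < 1" and i: "i \<ge> 1"
  shows "\<bar>measure_pmf.expectation (binomial_pmf i a) (\<lambda>x. if b_visible b1 b2 (int x, int (i - x)) then 1 else 0)
          - (\<Prod>p\<in>{p. prime p \<and> p ^ b1 dvd i}. 1 - 1 / real p ^ b2)\<bar>
         \<le> 2 ^ card {p. prime p \<and> p ^ b1 dvd i} * ((1/2 + 1/(a^2*(1-a)^2) + 1/(1-a)) / sqrt (real i)) + a ^ i + (1 - a) ^ i"
proof -
  define A where "A = {p. prime p \<and> p ^ b1 dvd i}"
  define K where "K = (1/2 + 1/(a^2*(1-a)^2) + 1/(1-a)) / sqrt (real i)"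
  define vis where "vis = (\<lambda>x. if b_visible b1 b2 (int x, int (i - x)) then 1 else (0::real))"
  define crit where "crit = (\<lambda>k. if \<forall>p\<in>A. \<not> p ^ b2 dvd (i - k) then 1 else (0::real))"
  have finA: "finite A" unfolding A_def by (rule Aset_props[OF b1 i])
  have primA: "\<forall>p\<in>A. prime p" unfolding A_def by auto
  have E: "measure_pmf.expectation (binomial_pmf i a) vis = (\<Sum>k\<le>i. bq i a k * vis k)"
    using a by (subst expectation_binomial_pmf') (auto simp: bq_def)
  have D1: "\<bar>(\<Sum>k\<le>i. bq i a k * vis k) - (\<Sum>k\<le>i. bq i a k * crit k)\<bar> \<le> a ^ i + (1 - a) ^ i"
  proof -
    have "\<bar>(\<Sum>k\<le>i. bq i a k * vis k) - (\<Sum>k\<le>i. bq i a k * crit k)\<bar> = \<bar>\<Sum>k\<le>i. bq i a k * (vis k - crit k)\<bar>"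
      by (simp add: sum_subtractf right_diff_distrib)
    also have "\<dots> \<le> (\<Sum>k\<le>i. bq i a k * ((if k = 0 then 1 else 0) + (if k = i then 1 else 0)))"
    proof (rule order.trans[OF sum_abs sum_mono])
      fix k assume k: "k \<in> {..i}"
      have "\<bar>vis k - crit k\<bar> \<le> (if k = 0 then 1 else 0) + (if k = i then 1 else 0)"
      proof (cases "k = 0 \<or> k = i")
        case True
        have "\<bar>vis k - crit k\<bar> \<le> 1" unfolding vis_def crit_def by auto
        thus ?thesis using True by auto
      next
        case False
        hence "0 < k" "k < i" using k by auto
        hence "vis k = crit k" unfolding vis_def crit_def A_def using vis_crit[OF b1 cop le] by simp
        thus ?thesis by simp
      qed
      thus "\<bar>bq i a k * (vis k - crit k)\<bar> \<le> bq i a k * ((if k = 0 then 1 else 0) + (if k = i then 1 else 0))"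
        using bq_nonneg[of a i k] a by (simp add: abs_mult mult_left_mono)
    qed
    also have "\<dots> = bq i a 0 + bq i a i"
      by (simp add: distrib_left sum.distrib if_distrib[of "\<lambda>x. bq i a _ * x"] cong: if_cong)
    also have "\<dots> = a ^ i + (1 - a) ^ i" by (simp add: bq_def)
    finally show ?thesis .
  qed
  have D2: "\<bar>(\<Sum>k\<le>i. bq i a k * crit k) - (\<Prod>p\<in>A. 1 - 1 / real p ^ b2)\<bar> \<le> 2 ^ card A * K"
  proof -
    let ?m = "\<lambda>S. (\<Prod>S) ^ b2"
    let ?T = "\<lambda>S. (\<Sum>k\<le>i. bq i a k * (if ?m S dvd (i - k) then 1 else 0))"
    have "(\<Sum>k\<le>i. bq i a k * crit k) = (\<Sum>k\<le>i. bq i a k * (\<Sum>S\<in>Pow A. (-1) ^ card S * (if ?m S dvd (i - k) then 1 else 0)))"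
      unfolding crit_def by (simp only: crit_expand[OF finA primA])
    also have "\<dots> = (\<Sum>S\<in>Pow A. (-1) ^ card S * ?T S)"
      by (simp add: sum_distrib_left sum.swap[of _ "Pow A"] mult.left_commute)
    finally have e1: "(\<Sum>k\<le>i. bq i a k * crit k) = (\<Sum>S\<in>Pow A. (-1) ^ card S * ?T S)" .
    have e2: "(\<Prod>p\<in>A. 1 - 1 / real p ^ b2) = (\<Sum>S\<in>Pow A. (-1) ^ card S * (1 / real (?m S)))"
      by (rule h_expand[OF finA])
    have "\<bar>(\<Sum>k\<le>i. bq i a k * crit k) - (\<Prod>p\<in>A. 1 - 1 / real p ^ b2)\<bar> =
          \<bar>\<Sum>S\<in>Pow A. (-1) ^ card S * (?T S - 1 / real (?m S))\<bar>"
      unfolding e1 e2 by (simp add: sum_subtractf right_diff_distrib)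
    also have "\<dots> \<le> (\<Sum>S\<in>Pow A. K)"
    proof (rule order.trans[OF sum_abs sum_mono])
      fix S assume S: "S \<in> Pow A"
      hence fS: "finite S" using finA by (auto intro: finite_subset)
      have pS: "\<forall>p\<in>S. prime p" using S primA by auto
      have m0: "?m S > 0" using prod_primes_pos[OF fS pS] by simp
      have "?T S = (\<Sum>k\<le>i. bq i a k * (if k mod ?m S = i mod ?m S then 1 else 0))"
      proof (rule sum.cong[OF refl])
        fix k assume "k \<in> {..i}"
        hence ki: "k \<le> i" by simp
        have "(?m S dvd (i - k)) = (i mod ?m S = k mod ?m S)" using mod_eq_dvd_iff_nat[OF ki] by simp
        thus "bq i a k * (if ?m S dvd (i - k) then 1 else 0) = bq i a k * (if k mod ?m S = i mod ?m S then 1 else 0)"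
          by auto
      qed
      hence "\<bar>?T S - 1 / real (?m S)\<bar> \<le> K" unfolding K_def using bin_residue[OF a i m0, of i] by simp
      thus "\<bar>(-1) ^ card S * (?T S - 1 / real (?m S))\<bar> \<le> K" by (simp add: abs_mult)
    qed
    also have "\<dots> = 2 ^ card A * K" using finA by (simp add: card_Pow)
    finally show ?thesis .
  qed
  have "\<bar>measure_pmf.expectation (binomial_pmf i a) vis - (\<Prod>p\<in>A. 1 - 1 / real p ^ b2)\<bar> \<le> 2 ^ card A * K + (a ^ i + (1 - a) ^ i)"
    using D1 D2 unfolding E by linarith
  thus ?thesis unfolding A_def K_def vis_def by simp
qed

lemma card_split: "card {k. k < i \<and> \<not> P k} = i - card {k. k < i \<and> P k}"
proof -
  have "{..<i} = {k. k < i \<and> P k} \<union> {k. k < i \<and> \<not> P k}" by auto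
  hence "card {..<i} = card {k. k < i \<and> P k} + card {k. k < i \<and> \<not> P k}"
    by (subst card_Un_disjoint[symmetric]) auto
  thus ?thesis by simp
qed

lemma Y_prod:
  "Y b1 b2 r \<omega> i = (\<Prod>j<r. (\<lambda>x. if b_visible b1 b2 (int x, int (i - x)) then 1 else 0) (card {k. k < i \<and> \<omega> (j,k)}))"
proof -
  have wp: "walk_pos \<omega> j i = (int (card {k. k < i \<and> \<omega> (j,k)}), int (i - card {k. k < i \<and> \<omega> (j,k)}))" for j
    unfolding walk_pos_def using card_split[of i "\<lambda>k. \<omega> (j,k)"] by simp
  show ?thesis unfolding Y_def wp
    using prod_if_all[of "{..<r}" "\<lambda>j. b_visible b1 b2 (int (card {k. k < i \<and> \<omega> (j,k)}), int (i - card {k. k < i \<and> \<omega> (j,k)}))" "\<lambda>_. 1"]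
    by simp
qed

lemma EY:
  assumes "i \<le> n" "\<forall>j<r. \<alpha> j \<in> {0..1}"
  shows "measure_pmf.expectation (walks_pmf \<alpha> r n) (\<lambda>\<omega>. Y b1 b2 r \<omega> i) =
         (\<Prod>j<r. measure_pmf.expectation (binomial_pmf i (\<alpha> j)) (\<lambda>x. if b_visible b1 b2 (int x, int (i - x)) then 1 else 0))"
  unfolding Y_prod by (rule expect_prod[OF assms]) auto

lemma E_vis_bounds:
  assumes "0 < a" "a < 1"
  shows "\<bar>measure_pmf.expectation (binomial_pmf i a) (\<lambda>x. if b_visible b1 b2 (int x, int (i - x)) then 1 else (0::real))\<bar> \<le> 1"
proof -
  let ?v = "\<lambda>x. if b_visible b1 b2 (int x, int (i - x)) then 1 else (0::real)"
  have E: "measure_pmf.expectation (binomial_pmf i a) ?v = (\<Sum>k\<le>i. bq i a k * ?v k)"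
    using assms by (subst expectation_binomial_pmf') (auto simp: bq_def)
  have s0: "0 \<le> (\<Sum>k\<le>i. bq i a k * ?v k)" using assms by (intro sum_nonneg mult_nonneg_nonneg bq_nonneg) auto
  have "(\<Sum>k\<le>i. bq i a k * ?v k) \<le> (\<Sum>k\<le>i. bq i a k)"
    using assms by (intro sum_mono) (auto intro: bq_nonneg)
  hence s1: "(\<Sum>k\<le>i. bq i a k * ?v k) \<le> 1" unfolding bq_sum .
  have "\<bar>\<Sum>k\<le>i. bq i a k * ?v k\<bar> \<le> 1" using s0 s1 by linarith
  thus ?thesis by (subst E)
qed

lemma EY_err:
  assumes b1: "b1 \<ge> 1" and cop: "coprime b1 b2" and le: "b1 \<le> b2" and i: "1 \<le> i" "i \<le> n"
    and \<alpha>: "\<forall>j<r. 0 < \<alpha> j \<and> \<alpha> j < 1"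
  shows "\<bar>measure_pmf.expectation (walks_pmf \<alpha> r n) (\<lambda>\<omega>. Y b1 b2 r \<omega> i) - gfun b1 b2 r i\<bar>
     \<le> (\<Sum>j<r. 2 ^ card {p. prime p \<and> p ^ b1 dvd i} * ((1/2 + 1/(\<alpha> j^2*(1-\<alpha> j)^2) + 1/(1-\<alpha> j)) / sqrt (real i))
              + \<alpha> j ^ i + (1 - \<alpha> j) ^ i)"
proof -
  define A where "A = {p. prime p \<and> p ^ b1 dvd i}"
  define h where "h = (\<Prod>p\<in>A. 1 - 1 / real p ^ b2)"
  let ?E = "\<lambda>j. measure_pmf.expectation (binomial_pmf i (\<alpha> j)) (\<lambda>x. if b_visible b1 b2 (int x, int (i - x)) then 1 else 0)"
  have finA: "finite A" unfolding A_def by (rule Aset_props[OF b1 i(1)])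
  have g: "gfun b1 b2 r i = (\<Prod>j<r. h)"
    unfolding gfun_def cp_def h_def A_def[symmetric] by (simp add: prod_power_distrib)
  have h1: "\<bar>h\<bar> \<le> 1"
  proof -
    have "\<forall>p\<in>A. 0 \<le> 1 - 1 / real p ^ b2 \<and> 1 - 1 / real p ^ b2 \<le> 1"
    proof
      fix p assume "p \<in> A"
      hence "prime p" unfolding A_def by simp
      hence "real p \<ge> 1" using prime_gt_0_nat[of p] by simp
      thus "0 \<le> 1 - 1 / real p ^ b2 \<and> 1 - 1 / real p ^ b2 \<le> 1" by simp
    qed
    thus ?thesis unfolding h_def by (simp add: abs_prod prod_le_1 abs_le_iff prod_nonneg)
  qed
  have "measure_pmf.expectation (walks_pmf \<alpha> r n) (\<lambda>\<omega>. Y b1 b2 r \<omega> i) = (\<Prod>j<r. ?E j)"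
    using i \<alpha> by (intro EY) auto
  hence "\<bar>measure_pmf.expectation (walks_pmf \<alpha> r n) (\<lambda>\<omega>. Y b1 b2 r \<omega> i) - gfun b1 b2 r i\<bar> = \<bar>(\<Prod>j<r. ?E j) - (\<Prod>j<r. h)\<bar>"
    using g by simp
  also have "\<dots> \<le> (\<Sum>j<r. \<bar>?E j - h\<bar>)"
    using h1 \<alpha> by (intro prod_diff_le E_vis_bounds) auto
  also have "\<dots> \<le> (\<Sum>j<r. 2 ^ card A * ((1/2 + 1/(\<alpha> j^2*(1-\<alpha> j)^2) + 1/(1-\<alpha> j)) / sqrt (real i))
              + \<alpha> j ^ i + (1 - \<alpha> j) ^ i)"
    unfolding h_def A_def using \<alpha> i by (intro sum_mono walk_err b1 cop le) auto
  finally show ?thesis unfolding A_def .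
qed

lemma prod_powr:
  fixes S :: "nat set"
  shows "(\<Prod>p\<in>S. real p powr e) = real (\<Prod>S) powr e"
  by (induction S rule: infinite_finite_induct) (auto simp: powr_mult)

lemma two_pow_bound:
  fixes S :: "nat set"
  assumes fS: "finite S" and pS: "\<forall>p\<in>S. prime p" and SN: "\<Prod>S \<le> N" and e: "e > 0"
  shows "2 ^ card S \<le> 2 ^ nat \<lceil>2 powr (1/e)\<rceil> * real N powr e"
proof -
  define M where "M = 2 powr (1/e)"
  define w where "w = (\<lambda>p::nat. if real p < M then 2 else (1::real))"
  have pt: "2 \<le> w p * real p powr e" if "p \<in> S" for p
  proof -
    have p1: "real p \<ge> 1" using pS that prime_gt_0_nat[of p] by simp
    show ?thesis
    proof (cases "real p < M")
      case True
      have "1 \<le> real p powr e" using p1 e by (intro ge_one_powr_ge_zero) auto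
      thus ?thesis using True unfolding w_def by simp
    next
      case False
      have "M powr e \<le> real p powr e" using False e unfolding M_def by (intro powr_mono2) auto
      moreover have "M powr e = 2" unfolding M_def using e by (simp add: powr_powr)
      ultimately show ?thesis using False unfolding w_def by simp
    qed
  qed
  have "(2::real) ^ card S = (\<Prod>p\<in>S. 2)" by simp
  also have "\<dots> \<le> (\<Prod>p\<in>S. w p * real p powr e)"
    by (intro prod_mono) (use pt in auto)
  also have "\<dots> = (\<Prod>p\<in>S. w p) * real (\<Prod>S) powr e" by (simp add: prod.distrib prod_powr)
  also have "\<dots> \<le> 2 ^ nat \<lceil>M\<rceil> * real N powr e"
  proof (rule mult_mono)
    have "(\<Prod>p\<in>S. w p) = (\<Prod>p\<in>{p\<in>S. real p < M}. 2)"
      unfolding w_def using fS by (subst prod.inter_filter) auto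
    also have "\<dots> = 2 ^ card {p\<in>S. real p < M}" by simp
    also have "\<dots> \<le> 2 ^ nat \<lceil>M\<rceil>"
    proof (rule power_increasing)
      have "{p\<in>S. real p < M} \<subseteq> {..<nat \<lceil>M\<rceil>}"
      proof
        fix x assume "x \<in> {p\<in>S. real p < M}"
        hence "real x < M" by simp
        hence "real x < real_of_int \<lceil>M\<rceil>" using le_of_int_ceiling[of M] by linarith
        hence "real_of_int (int x) < real_of_int \<lceil>M\<rceil>" by simp
        hence "int x < \<lceil>M\<rceil>" by (simp only: of_int_less_iff)
        thus "x \<in> {..<nat \<lceil>M\<rceil>}" by (simp add: zless_nat_eq_int_zless)
      qed
      thus "card {p\<in>S. real p < M} \<le> nat \<lceil>M\<rceil>" using card_mono[of "{..<nat \<lceil>M\<rceil>}"] by fastforce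
    qed simp
    finally show "(\<Prod>p\<in>S. w p) \<le> 2 ^ nat \<lceil>M\<rceil>" .
    have h: "real (\<Prod>S) \<le> real N" using SN by (simp only: of_nat_le_iff)
    show "real (\<Prod>S) powr e \<le> real N powr e" using h e by (intro powr_mono2) (auto simp: prod_nonneg)
  qed (auto simp: w_def intro: prod_nonneg)
  finally show ?thesis unfolding M_def by simp
qed

lemma card_A_bound:
  assumes b1: "b1 \<ge> 1" and i: "1 \<le> i" "i \<le> n" and e: "e > 0"
  shows "2 ^ card {p. prime p \<and> p ^ b1 dvd i} \<le> 2 ^ nat \<lceil>2 powr (1/e)\<rceil> * real n powr e"
proof (rule two_pow_bound[OF Aset_props[OF b1 i(1)] _ _ e])
  show "\<forall>p\<in>{p. prime p \<and> p ^ b1 dvd i}. prime p" by simp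
  have "(\<Prod>{p. prime p \<and> p ^ b1 dvd i}) ^ 1 dvd i"
  proof (rule prod_pow_dvd[OF Aset_props[OF b1 i(1)]])
    show "\<forall>p\<in>{p. prime p \<and> p ^ b1 dvd i}. p ^ 1 dvd i"
    proof
      fix p assume p: "p \<in> {p. prime p \<and> p ^ b1 dvd i}"
      have "p dvd p ^ b1" using b1 by (intro dvd_power) auto
      thus "p ^ 1 dvd i" using p by (auto intro: dvd_trans)
    qed
  qed simp
  hence "\<Prod>{p. prime p \<and> p ^ b1 dvd i} \<le> i" using i by (intro dvd_imp_le) auto
  thus "\<Prod>{p. prime p \<and> p ^ b1 dvd i} \<le> n" using i by simp
qed

lemma sum_inv_sqrt: "(\<Sum>i=1..n. 1 / sqrt (real i)) \<le> 2 * sqrt (real n)"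
proof (induction n)
  case 0 thus ?case by simp
next
  case (Suc n)
  have key: "2 * sqrt (real n) + 1 / sqrt (real (Suc n)) \<le> 2 * sqrt (real (Suc n))"
  proof -
    have sp: "sqrt (real (Suc n)) > 0" by simp
    have "sqrt (real n) * sqrt (real (Suc n)) = sqrt (real n * real (Suc n))" by (simp add: real_sqrt_mult)
    also have "\<dots> \<le> sqrt ((real n + 1/2)^2)"
      by (intro real_sqrt_le_mono) (simp add: power2_eq_square algebra_simps)
    also have "\<dots> = real n + 1/2" by simp
    finally have a: "sqrt (real n) * sqrt (real (Suc n)) \<le> real n + 1/2" .
    have "(2 * sqrt (real n) + 1 / sqrt (real (Suc n))) * sqrt (real (Suc n)) =
          2 * (sqrt (real n) * sqrt (real (Suc n))) + 1"
      using sp by (simp add: field_simps)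
    also have "\<dots> \<le> 2 * (real n + 1/2) + 1" using a by simp
    also have "\<dots> = (2 * sqrt (real (Suc n))) * sqrt (real (Suc n))"
    proof -
      have "sqrt (real (Suc n)) * sqrt (real (Suc n)) = real (Suc n)" by simp
      thus ?thesis by (simp only: mult.assoc) simp
    qed
    finally show ?thesis using sp by (simp add: mult_le_cancel_right)
  qed
  have "(\<Sum>i=1..Suc n. 1 / sqrt (real i)) = (\<Sum>i=1..n. 1 / sqrt (real i)) + 1 / sqrt (real (Suc n))"
    by simp
  also have "\<dots> \<le> 2 * sqrt (real n) + 1 / sqrt (real (Suc n))" using Suc by simp
  also note key
  finally show ?case .
qed

lemma geom_sum_bound:
  assumes "0 \<le> a" "a < (1::real)"
  shows "(\<Sum>i=1..n. a ^ i) \<le> 1 / (1 - a)"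
proof -
  have gs: "(1 - a) * (\<Sum>k<m. a ^ k) = 1 - a ^ m" for m
  proof (induct m)
    case 0 show ?case by simp
  next
    case (Suc m)
    have "(1 - a) * (\<Sum>k<Suc m. a ^ k) = (1 - a) * (\<Sum>k<m. a ^ k) + (1 - a) * a ^ m"
      by (simp only: sum.lessThan_Suc distrib_left)
    also have "\<dots> = (1 - a ^ m) + (1 - a) * a ^ m" by (simp only: Suc)
    also have "\<dots> = 1 - a ^ Suc m" by (simp add: algebra_simps)
    finally show ?case .
  qed
  have "(\<Sum>i=1..n. a ^ i) \<le> (\<Sum>i<Suc n. a ^ i)"
    using assms by (intro sum_mono2) auto
  also have "\<dots> = (1 - a ^ Suc n) / (1 - a)"
  proof -
    have ne: "1 - a \<noteq> 0" using assms by simp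
    show ?thesis by (subst nonzero_eq_divide_eq[OF ne]) (simp only: mult.commute[of _ "1 - a"] gs)
  qed
  also have "\<dots> \<le> 1 / (1 - a)" using assms by (intro divide_right_mono) auto
  finally show ?thesis .
qed

lemma E_Rbar:
  assumes "n \<ge> 1"
  shows "measure_pmf.expectation (walks_pmf \<alpha> r n) (Rbar b1 b2 r n) =
         (1 / real n) * (\<Sum>i=1..n. measure_pmf.expectation (walks_pmf \<alpha> r n) (\<lambda>\<omega>. Y b1 b2 r \<omega> i))"
proof -
  have "measure_pmf.expectation (walks_pmf \<alpha> r n) (Rbar b1 b2 r n) =
        (1 / real n) * measure_pmf.expectation (walks_pmf \<alpha> r n) (\<lambda>\<omega>. \<Sum>i=1..n. Y b1 b2 r \<omega> i)"
    unfolding Rbar_def by (rule integral_mult_right_zero)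
  also have "measure_pmf.expectation (walks_pmf \<alpha> r n) (\<lambda>\<omega>. \<Sum>i=1..n. Y b1 b2 r \<omega> i) =
        (\<Sum>i=1..n. measure_pmf.expectation (walks_pmf \<alpha> r n) (\<lambda>\<omega>. Y b1 b2 r \<omega> i))"
    by (rule Bochner_Integration.integral_sum) (auto intro!: measure_pmf.integrable_const_bound[where B=1] simp: Y_def)
  finally show ?thesis .
qed

lemma err_sum:
  assumes b1: "b1 \<ge> 1" and cop: "coprime b1 b2" and le: "b1 \<le> b2"
    and \<alpha>: "\<forall>j<r. 0 < \<alpha> j \<and> \<alpha> j < 1" and e: "e > 0" and n: "n \<ge> 1"
  shows "(\<Sum>i=1..n. \<bar>measure_pmf.expectation (walks_pmf \<alpha> r n) (\<lambda>\<omega>. Y b1 b2 r \<omega> i) - gfun b1 b2 r i\<bar>)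
     \<le> 2 ^ nat \<lceil>2 powr (1/e)\<rceil> * (\<Sum>j<r. (1/2 + 1/(\<alpha> j^2*(1-\<alpha> j)^2) + 1/(1-\<alpha> j))) * (real n powr e * (2 * sqrt (real n)))
       + (\<Sum>j<r. 1 / (1 - \<alpha> j) + 1 / \<alpha> j)"
proof -
  define C :: real where "C = 2 ^ nat \<lceil>2 powr (1/e)\<rceil>"
  define K where "K = (\<lambda>j. (1/2 + 1/(\<alpha> j^2*(1-\<alpha> j)^2) + 1/(1-\<alpha> j)))"
  have K0: "K j \<ge> 0" if "j < r" for j
  proof -
    have "0 < 1 - \<alpha> j" using \<alpha> that by simp
    thus ?thesis unfolding K_def by (intro add_nonneg_nonneg) auto
  qed
  have "(\<Sum>i=1..n. \<bar>measure_pmf.expectation (walks_pmf \<alpha> r n) (\<lambda>\<omega>. Y b1 b2 r \<omega> i) - gfun b1 b2 r i\<bar>)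
     \<le> (\<Sum>i=1..n. \<Sum>j<r. 2 ^ card {p. prime p \<and> p ^ b1 dvd i} * (K j / sqrt (real i)) + \<alpha> j ^ i + (1 - \<alpha> j) ^ i)"
    unfolding K_def by (intro sum_mono EY_err b1 cop le \<alpha>) auto
  also have "\<dots> \<le> (\<Sum>i=1..n. \<Sum>j<r. (C * real n powr e * K j) * (1 / sqrt (real i)) + \<alpha> j ^ i + (1 - \<alpha> j) ^ i)"
  proof (intro sum_mono add_mono order.refl)
    fix i j assume i: "i \<in> {1..n}" and j: "j \<in> {..<r}"
    have "2 ^ card {p. prime p \<and> p ^ b1 dvd i} * (K j / sqrt (real i)) \<le> (C * real n powr e) * (K j / sqrt (real i))"
      unfolding C_def using i j K0 by (intro mult_right_mono card_A_bound b1 e) auto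
    thus "2 ^ card {p. prime p \<and> p ^ b1 dvd i} * (K j / sqrt (real i)) \<le> (C * real n powr e * K j) * (1 / sqrt (real i))"
      by simp
  qed
  also have "\<dots> = (\<Sum>j<r. (C * real n powr e * K j) * (\<Sum>i=1..n. 1 / sqrt (real i)) + (\<Sum>i=1..n. \<alpha> j ^ i) + (\<Sum>i=1..n. (1 - \<alpha> j) ^ i))"
    by (subst sum.swap) (simp add: sum.distrib sum_distrib_left)
  also have "\<dots> \<le> (\<Sum>j<r. (C * real n powr e * K j) * (2 * sqrt (real n)) + 1 / (1 - \<alpha> j) + 1 / (1 - (1 - \<alpha> j)))"
  proof (intro sum_mono add_mono mult_left_mono)
    fix j assume j: "j \<in> {..<r}"
    show "(\<Sum>i=1..n. 1 / sqrt (real i)) \<le> 2 * sqrt (real n)" by (rule sum_inv_sqrt)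
    show "0 \<le> C * real n powr e * K j" unfolding C_def using K0 j by simp
    show "(\<Sum>i=1..n. \<alpha> j ^ i) \<le> 1 / (1 - \<alpha> j)" using \<alpha> j by (intro geom_sum_bound) auto
    show "(\<Sum>i=1..n. (1 - \<alpha> j) ^ i) \<le> 1 / (1 - (1 - \<alpha> j))" using \<alpha> j by (intro geom_sum_bound) auto
  qed
  also have "\<dots> = C * (\<Sum>j<r. K j) * (real n powr e * (2 * sqrt (real n))) + (\<Sum>j<r. 1 / (1 - \<alpha> j) + 1 / \<alpha> j)"
    by (simp add: sum.distrib sum_distrib_left sum_distrib_right algebra_simps)
  finally show ?thesis unfolding C_def K_def .
qed

lemma aux_split:
  fixes x A G Lf L :: real
  shows "(1/x) * A - L = (1/x) * (A - G) + (G / x - Lf) + (Lf - L)"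
  by (cases "x = 0") (simp_all add: field_simps)

lemma powr_facts:
  assumes n: "real n \<ge> 1" and e: "e > 0"
  shows "(1 / real n) * (real n powr e * (2 * sqrt (real n))) = 2 * real n powr (-1/2 + e)"
    "1 / real n \<le> real n powr (-1/2 + e)"
    "1 / sqrt (real n) \<le> real n powr (-1/2 + e)"
proof -
  have n0: "real n > 0" using n by simp
  have sq: "sqrt (real n) = real n powr (1/2)" using n0 by (simp add: powr_half_sqrt)
  have "(1 / real n) * (real n powr e * (2 * sqrt (real n))) = 2 * (real n powr e * real n powr (1/2) / real n powr 1)"
    unfolding sq using n0 by simp
  also have "real n powr e * real n powr (1/2) / real n powr 1 = real n powr (-1/2 + e)"
  proof -
    have "real n powr e * real n powr (1/2) = real n powr (e + 1/2)" by (simp add: powr_add)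
    moreover have "real n powr (-1/2 + e) = real n powr ((e + 1/2) - 1)"
      by (rule arg_cong[where f="\<lambda>t. real n powr t"]) simp
    moreover have "real n powr ((e + 1/2) - 1) = real n powr (e + 1/2) / real n powr 1"
      by (rule powr_diff)
    ultimately show ?thesis by simp
  qed
  finally show "(1 / real n) * (real n powr e * (2 * sqrt (real n))) = 2 * real n powr (-1/2 + e)" .
  have "1 / real n = real n powr (-1)" using n0 by (simp add: powr_minus_divide)
  also have "\<dots> \<le> real n powr (-1/2 + e)" using n e by (intro powr_mono) auto
  finally show "1 / real n \<le> real n powr (-1/2 + e)" .
  have "1 / sqrt (real n) = real n powr (-1/2)" unfolding sq using n0 by (simp add: powr_minus_divide)
  also have "\<dots> \<le> real n powr (-1/2 + e)" using n e by (intro powr_mono) auto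
  finally show "1 / sqrt (real n) \<le> real n powr (-1/2 + e)" .
qed

theorem proposition4p1:
  fixes b1 b2 r :: nat and \<alpha> :: "nat \<Rightarrow> real" and \<epsilon> :: real
  assumes "b1 \<ge> 1" and "coprime b1 b2" and "b1 \<le> b2" and "r \<ge> 1"
    and "\<forall>j<r. 0 < \<alpha> j \<and> \<alpha> j < 1" and "\<epsilon> > 0"
  shows "(\<lambda>n. measure_pmf.expectation (walks_pmf \<alpha> r n) (Rbar b1 b2 r n)
            - (\<Prod>p. if prime p then 1 - 1 / real p ^ b1 + 1 / real p ^ b1 * (1 - 1 / real p ^ b2) ^ r
                     else 1))
         \<in> O(\<lambda>n. real n powr (-1/2 + \<epsilon>))"
proof -
  note b1 = assms(1) and cop = assms(2) and le = assms(3) and \<alpha> = assms(5) and e = assms(6)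
  have b2: "b2 \<ge> 1" using b1 le by simp
  define C :: real where "C = 2 ^ nat \<lceil>2 powr (1/\<epsilon>)\<rceil>"
  define KK where "KK = (\<Sum>j<r. (1/2 + 1/(\<alpha> j^2*(1-\<alpha> j)^2) + 1/(1-\<alpha> j)))"
  define BB where "BB = (\<Sum>j<r. 1 / (1 - \<alpha> j) + 1 / \<alpha> j)"
  define Zc where "Zc = exp (real r * (\<Sum>m. real m powr (-3/2)))"
  define L where "L = (\<Prod>p. if prime p then 1 - 1 / real p ^ b1 + 1 / real p ^ b1 * (1 - 1 / real p ^ b2) ^ r else 1)"
  have L: "L = prodinf (Ffac b1 b2 r)" unfolding L_def Ffac_def by simp
  have C0: "C \<ge> 0" unfolding C_def by simp
  have KK0: "KK \<ge> 0" unfolding KK_def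
  proof (intro sum_nonneg)
    fix j assume "j \<in> {..<r}"
    hence "0 < 1 - \<alpha> j" using \<alpha> by simp
    thus "0 \<le> 1/2 + 1/(\<alpha> j^2*(1-\<alpha> j)^2) + 1/(1-\<alpha> j)" by (intro add_nonneg_nonneg) auto
  qed
  have BB0: "BB \<ge> 0" unfolding BB_def
  proof (intro sum_nonneg)
    fix j assume "j \<in> {..<r}"
    hence "0 < 1 - \<alpha> j" "0 < \<alpha> j" using \<alpha> by auto
    thus "0 \<le> 1 / (1 - \<alpha> j) + 1 / \<alpha> j" by simp
  qed
  have Zc0: "Zc \<ge> 0" unfolding Zc_def by simp
  have main: "\<bar>measure_pmf.expectation (walks_pmf \<alpha> r n) (Rbar b1 b2 r n) - L\<bar>
      \<le> (2 * C * KK + BB + Zc + real r) * real n powr (-1/2 + \<epsilon>)" if n: "n \<ge> 1" for n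
  proof -
    let ?EY = "\<lambda>i. measure_pmf.expectation (walks_pmf \<alpha> r n) (\<lambda>\<omega>. Y b1 b2 r \<omega> i)"
    let ?g = "\<lambda>i. gfun b1 b2 r i"
    define P where "P = real n powr (-1/2 + \<epsilon>)"
    have x1: "real n \<ge> 1" using n by simp
    note pf = powr_facts[OF x1 e]
    have eq: "measure_pmf.expectation (walks_pmf \<alpha> r n) (Rbar b1 b2 r n) - L =
        (1 / real n) * (\<Sum>i=1..n. ?EY i - ?g i) + ((\<Sum>i=1..n. ?g i) / real n - Lfin b1 b2 r n) + (Lfin b1 b2 r n - L)"
      unfolding E_Rbar[OF n] sum_subtractf by (rule aux_split)
    have t1: "\<bar>(1 / real n) * (\<Sum>i=1..n. ?EY i - ?g i)\<bar> \<le> (1 / real n) * (C * KK * (real n powr \<epsilon> * (2 * sqrt (real n))) + BB)"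
    proof -
      have "\<bar>(1 / real n) * (\<Sum>i=1..n. ?EY i - ?g i)\<bar> = (1 / real n) * \<bar>\<Sum>i=1..n. ?EY i - ?g i\<bar>"
        by (simp add: abs_mult)
      also have "\<dots> \<le> (1 / real n) * (\<Sum>i=1..n. \<bar>?EY i - ?g i\<bar>)"
        by (intro mult_left_mono sum_abs) auto
      also have "\<dots> \<le> (1 / real n) * (C * KK * (real n powr \<epsilon> * (2 * sqrt (real n))) + BB)"
        unfolding C_def KK_def BB_def by (intro mult_left_mono err_sum b1 cop le \<alpha> e n) auto
      finally show ?thesis .
    qed
    have t2: "\<bar>(\<Sum>i=1..n. ?g i) / real n - Lfin b1 b2 r n\<bar> \<le> Zc / sqrt (real n)"
      unfolding Zc_def by (rule MT_bound[OF b1 b2 n])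
    have t3: "\<bar>Lfin b1 b2 r n - L\<bar> \<le> real r / real n"
      unfolding L by (rule tail_bound[OF b1 b2 n])
    have "\<bar>measure_pmf.expectation (walks_pmf \<alpha> r n) (Rbar b1 b2 r n) - L\<bar>
        \<le> (1 / real n) * (C * KK * (real n powr \<epsilon> * (2 * sqrt (real n))) + BB) + Zc / sqrt (real n) + real r / real n"
      unfolding eq using t1 t2 t3 by linarith
    also have "(1 / real n) * (C * KK * (real n powr \<epsilon> * (2 * sqrt (real n))) + BB)
        = C * KK * ((1 / real n) * (real n powr \<epsilon> * (2 * sqrt (real n)))) + BB * (1 / real n)"
      by (simp add: algebra_simps)
    also have "\<dots> = 2 * C * KK * P + BB * (1 / real n)" unfolding pf(1) P_def by simp
    also have "BB * (1 / real n) \<le> BB * P" unfolding P_def using BB0 pf(2) by (intro mult_left_mono) auto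
    also have "Zc / sqrt (real n) = Zc * (1 / sqrt (real n))" by simp
    also have "\<dots> \<le> Zc * P" unfolding P_def using Zc0 pf(3) by (intro mult_left_mono) auto
    also have "real r / real n = real r * (1 / real n)" by simp
    also have "\<dots> \<le> real r * P" unfolding P_def using pf(2) by (intro mult_left_mono) auto
    finally show ?thesis unfolding P_def by (simp add: algebra_simps)
  qed
  show ?thesis unfolding L_def[symmetric]
  proof (rule bigoI[where c = "2 * C * KK + BB + Zc + real r"])
    show "\<forall>\<^sub>F n in at_top. norm (measure_pmf.expectation (walks_pmf \<alpha> r n) (Rbar b1 b2 r n) - L)
           \<le> (2 * C * KK + BB + Zc + real r) * norm (real n powr (-1/2 + \<epsilon>))"
      unfolding eventually_at_top_linorder using main by (intro exI[of _ 1]) auto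
  qed
qed


end
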